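(* Let $\Gamma$ be a finite collection of supports $\gamma\subseteq\{1,\dots,n\}$, and let $\mathcal N_\Gamma=\circ_{\gamma\in\Gamma}\mathcal N_\gamma$ be a total Pauli channel that is a composition of local Pauli channels $\mathcal N_\gamma$ with supports $\gamma\in\Gamma$, all satisfying Assumption (A). Let a stabilizer (subsystem) code with measured stabilizer subgroup $\mathcal M$ be given. Then, using the syndrome data (i.e. the syndrome expectation values $\Lambda(M)$, $M\in\mathcal M$): 1. The total channel $\mathcal N_\Gamma$ is learnable if and only if every error $e\in\overline{\mathcal E}_\Gamma$ has a syndrome that is nontrivial and distinct from the syndromes of all other errors in $\overline{\mathcal E}_\Gamma$. 2. A given individual channel $\mathcal N_\gamma$ is learnable if and only if every $e\in\mathcal E_\gamma$ produces a syndrome that is nontrivial and unique among the syndromes of all errors in $\mathcal E_\Gamma$. 3. For every nontrivial syndrome class $C\in\mathcal C^*$, the syndrome class error rate $P_C=\sum_{e\in C}p_e$ can be learned up to an $\mathcal O(\|\vec p^{(\Gamma_C)}\|^2)$ deviation, i.e. there is a quantity uniquely determined by the syndrome expectation values that differs from $P_C$ by $\mathcal O(\|\vec p^{(\Gamma_C)}\|^2)$.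
   Context: $\mathcal P_n=\{I,X,Y,Z\}^{\otimes n}$ denotes the $n$-qubit Pauli operators without phases. For $A,B\in\mathcal P_n$, $[[A,B]]=1$ if $A,B$ commute and $-1$ otherwise; $\langle A,B\rangle=0$ if they commute and $1$ otherwise. A Pauli channel acts as $\rho\mapsto\sum_{e\in\mathcal P_n}P(e)e\rho e^\dagger$. For each $\gamma\in\Gamma$, the local channel $\mathcal N_\gamma$ has error distribution $P_\gamma$ on $\mathcal P_n$ with $P_\gamma(e)=0$ unless $\mathrm{supp}(e)\subseteq\gamma$; the total channel is the composition, whose error distribution $P$ is the convolution of the $P_\gamma$ over the Pauli group. Assumption (A): for every $\gamma\in\Gamma$, $P_\gamma(I)>1/2$, and $P_\gamma(e)>0$ for every non-identity $e$ with $\mathrm{supp}(e)\subseteq\gamma$. Let $\mathcal E_\gamma$ be the set of non-identity Paulis supported in $\gamma$; $\mathcal E_\Gamma$ is the disjoint union of the $\mathcal E_\gamma$ (each element $e$ remembers its channel $\gamma_e$, so the same operator from different channels gives distinct elements), and $\overline{\mathcal E}_\Gamma=\bigcup_\gamma\mathcal E_\gamma$ as a set of operators. Local error rates: $p_e=P_{\gamma_e}(e)$ for $e\in\mathcal E_\Gamma$. The code has stabilizer group $\mathcal S$ (the center of the gauge group, an abelian subgroup of $\mathcal P_n$); a codeword is stabilized by $\mathcal S$. Only a subgroup $\mathcal M\le\mathcal S$ generated by measured generators $M_1,\dots,M_m$ is measured. The experiment (prepare a codeword, apply $\mathcal N_\Gamma$, perfectly measure the generators) is repeated; the syndrome statistics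 are equivalently given by the syndrome expectation values $\Lambda(M)=\sum_e P(e)[[e,M]]$ for $M\in\mathcal M$. A quantity is learnable if it is uniquely determined by $(\Lambda(M))_{M\in\mathcal M}$ among all channels of this form (with the given $\Gamma$) satisfying Assumption (A). The syndrome of $e$ is $(\langle e,M\rangle)_{M\in\mathcal M}$ (equivalently its commutation with $M_1,\dots,M_m$); an error is detectable if its syndrome is nontrivial. Syndrome classes are the equivalence classes of $\mathcal E_\Gamma$ under equality of syndromes; $C_0$ is the class of trivial syndrome and $\mathcal C^*$ the set of nontrivial classes. For $C\in\mathcal C^*$, $\Gamma_C=\{\gamma\in\Gamma:\mathcal E_\gamma\cap C\ne\emptyset\}$ and $\vec p^{(\Gamma_C)}$ is the vector of error rates $p_e$ for $e\in\bigcup_{\gamma\in\Gamma_C}\mathcal E_\gamma$. *)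

theory Defs
  imports "HOL-Analysis.Analysis"
begin

datatype pauli = PI | PX | PY | PZ

text \<open>Product of single-qubit Paulis up to phase (the Klein four-group).\<close>
fun pauli_mult :: "pauli \<Rightarrow> pauli \<Rightarrow> pauli" where
  "pauli_mult PI b = b"
| "pauli_mult a PI = a"
| "pauli_mult PX PX = PI" | "pauli_mult PX PY = PZ" | "pauli_mult PX PZ = PY"
| "pauli_mult PY PX = PZ" | "pauli_mult PY PY = PI" | "pauli_mult PY PZ = PX"
| "pauli_mult PZ PX = PY" | "pauli_mult PZ PY = PX" | "pauli_mult PZ PZ = PI"

instantiation pauli :: comm_monoid_mult
begin
definition one_pauli_def: "1 = PI"
definition times_pauli_def: "a * b = pauli_mult a b"
instance
proof
  fix a b c :: pauli
  show "a * b * c = a * (b * c)"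
    unfolding times_pauli_def by (cases a; cases b; cases c) auto
  show "a * b = b * a"
    unfolding times_pauli_def by (cases a; cases b) auto
  show "1 * a = a"
    unfolding times_pauli_def one_pauli_def by simp
qed
end

text \<open>An n-qubit Pauli operator (without phase) is a map from qubit indices to single-qubit
  Paulis that is the identity outside the qubits 0..n-1 (indices are 0-based).\<close>
type_synonym npauli = "nat \<Rightarrow> pauli"

definition pid :: npauli where "pid = (\<lambda>_. PI)"

definition supp :: "npauli \<Rightarrow> nat set" where
  "supp e = {i. e i \<noteq> PI}"

definition paulis :: "nat \<Rightarrow> npauli set" where
  "paulis n = {e. supp e \<subseteq> {..<n}}"

definition supported_in :: "nat set \<Rightarrow> npauli set" where
  "supported_in \<gamma> = {e. supp e \<subseteq> \<gamma>}"

definition pprod :: "('g \<Rightarrow> npauli) \<Rightarrow> 'g set \<Rightarrow> npauli" where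
  "pprod f G = (\<lambda>i. \<Prod>\<gamma>\<in>G. f \<gamma> i)"

definition pmult :: "npauli \<Rightarrow> npauli \<Rightarrow> npauli" where
  "pmult A B = (\<lambda>i. A i * B i)"

text \<open>Symplectic form: anticomm A B is True iff A and B anticommute, i.e. <A,B> = 1.\<close>
definition anticomm :: "npauli \<Rightarrow> npauli \<Rightarrow> bool" where
  "anticomm A B \<longleftrightarrow> odd (card {i. A i \<noteq> PI \<and> B i \<noteq> PI \<and> A i \<noteq> B i})"

definition comm_sign :: "npauli \<Rightarrow> npauli \<Rightarrow> real" where
  "comm_sign A B = (if anticomm A B then -1 else 1)"

text \<open>Error sets: E_gamma (non-identity Paulis supported in gamma), the disjoint union
  E_Gamma (pairs (gamma, e) remembering the channel) and the plain union.\<close>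
definition errs :: "nat set \<Rightarrow> npauli set" where
  "errs \<gamma> = supported_in \<gamma> - {pid}"

definition errs_disj :: "nat set set \<Rightarrow> (nat set \<times> npauli) set" where
  "errs_disj \<Gamma> = Sigma \<Gamma> errs"

definition errs_union :: "nat set set \<Rightarrow> npauli set" where
  "errs_union \<Gamma> = (\<Union>\<gamma>\<in>\<Gamma>. errs \<gamma>)"

definition admissible :: "nat set set \<Rightarrow> (nat set \<Rightarrow> npauli \<Rightarrow> real) \<Rightarrow> bool" where
  "admissible \<Gamma> P \<longleftrightarrow>
     (\<forall>\<gamma>\<in>\<Gamma>. (\<forall>e. P \<gamma> e \<ge> 0)
            \<and> (\<forall>e. e \<notin> supported_in \<gamma> \<longrightarrow> P \<gamma> e = 0)
            \<and> (\<Sum>e\<in>supported_in \<gamma>. P \<gamma> e) = 1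
            \<and> P \<gamma> pid > 1/2
            \<and> (\<forall>e\<in>errs \<gamma>. P \<gamma> e > 0))"

text \<open>Error distribution of the composed channel: convolution over the Pauli group.\<close>
definition total_dist :: "nat set set \<Rightarrow> (nat set \<Rightarrow> npauli \<Rightarrow> real) \<Rightarrow> npauli \<Rightarrow> real" where
  "total_dist \<Gamma> P e =
     (\<Sum>f\<in>(\<Pi>\<^sub>E \<gamma>\<in>\<Gamma>. supported_in \<gamma>).
        if pprod f \<Gamma> = e then (\<Prod>\<gamma>\<in>\<Gamma>. P \<gamma> (f \<gamma>)) else 0)"

definition synd_exp :: "nat \<Rightarrow> nat set set \<Rightarrow> (nat set \<Rightarrow> npauli \<Rightarrow> real) \<Rightarrow> npauli \<Rightarrow> real" where
  "synd_exp n \<Gamma> P M = (\<Sum>e\<in>paulis n. total_dist \<Gamma> P e * comm_sign e M)"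

text \<open>A quantity Q (a function of the local channels) is learnable if it is uniquely
  determined by the syndrome expectation values (Lambda(M)) for M in the measured group,
  among all admissible channel families with the given Gamma.\<close>
definition learnable :: "nat \<Rightarrow> nat set set \<Rightarrow> npauli set \<Rightarrow> ((nat set \<Rightarrow> npauli \<Rightarrow> real) \<Rightarrow> 'a) \<Rightarrow> bool" where
  "learnable n \<Gamma> \<M> Q \<longleftrightarrow>
     (\<forall>P P'. admissible \<Gamma> P \<longrightarrow> admissible \<Gamma> P' \<longrightarrow>
        (\<forall>M\<in>\<M>. synd_exp n \<Gamma> P M = synd_exp n \<Gamma> P' M) \<longrightarrow> Q P = Q P')"

definition syndrome :: "npauli set \<Rightarrow> npauli \<Rightarrow> npauli \<Rightarrow> bool" where
  "syndrome \<M> e = (\<lambda>M. M \<in> \<M> \<and> anticomm e M)"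

definition trivial_syndrome :: "npauli \<Rightarrow> bool" where
  "trivial_syndrome = (\<lambda>_. False)"

definition synd_class :: "nat set set \<Rightarrow> npauli set \<Rightarrow> npauli \<Rightarrow> (nat set \<times> npauli) set" where
  "synd_class \<Gamma> \<M> e0 = {(\<gamma>, e) \<in> errs_disj \<Gamma>. syndrome \<M> e = syndrome \<M> e0}"

definition class_rate :: "(nat set \<times> npauli) set \<Rightarrow> (nat set \<Rightarrow> npauli \<Rightarrow> real) \<Rightarrow> real" where
  "class_rate C P = (\<Sum>(\<gamma>, e)\<in>C. P \<gamma> e)"

definition class_supports :: "(nat set \<times> npauli) set \<Rightarrow> nat set set" where
  "class_supports C = fst ` C"

definition rate_norm_sq :: "nat set set \<Rightarrow> (nat set \<Rightarrow> npauli \<Rightarrow> real) \<Rightarrow> real" where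
  "rate_norm_sq G P = (\<Sum>(\<gamma>, e)\<in>Sigma G errs. (P \<gamma> e)\<^sup>2)"

definition pauli_subgroup :: "nat \<Rightarrow> npauli set \<Rightarrow> bool" where
  "pauli_subgroup n G \<longleftrightarrow> G \<subseteq> paulis n \<and> pid \<in> G \<and> (\<forall>A\<in>G. \<forall>B\<in>G. pmult A B \<in> G)"

definition abelian_pauli_subgroup :: "nat \<Rightarrow> npauli set \<Rightarrow> bool" where
  "abelian_pauli_subgroup n G \<longleftrightarrow> pauli_subgroup n G \<and> (\<forall>A\<in>G. \<forall>B\<in>G. \<not> anticomm A B)"

end

theory Submission
  imports Defs
begin

lemma pauli_UNIV: "(UNIV :: pauli set) = {PI,PX,PY,PZ}"
  by (auto intro: pauli.exhaust)

lemma finite_pauli_UNIV[simp]: "finite (UNIV :: pauli set)"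
  by (simp add: pauli_UNIV)

lemma supported_in_out: "A \<in> supported_in S \<Longrightarrow> i \<notin> S \<Longrightarrow> A i = PI"
  unfolding supported_in_def supp_def by blast

lemma supported_inI: "(\<And>i. i \<notin> S \<Longrightarrow> A i = PI) \<Longrightarrow> A \<in> supported_in S"
  unfolding supported_in_def supp_def by blast

definition restr :: "nat set \<Rightarrow> npauli \<Rightarrow> npauli" where
  "restr S A = (\<lambda>i. if i \<in> S then A i else PI)"

lemma finite_supported_in:
  assumes "finite S" shows "finite (supported_in S)"
proof -
  have "supported_in S \<subseteq> (\<lambda>f i. if i \<in> S then f i else PI) ` (PiE S (\<lambda>_. UNIV))"
  proof
    fix e assume e: "e \<in> supported_in S"
    have "e = (\<lambda>i. if i \<in> S then restrict e S i else PI)"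
      using supported_in_out[OF e] by auto
    moreover have "restrict e S \<in> PiE S (\<lambda>_. UNIV)" by simp
    ultimately show "e \<in> (\<lambda>f i. if i \<in> S then f i else PI) ` (PiE S (\<lambda>_. UNIV))" by blast
  qed
  moreover have "finite (PiE S (\<lambda>_. UNIV::pauli set))"
    using assms by (intro finite_PiE) auto
  ultimately show ?thesis using finite_subset by blast
qed

lemma pm_PI1[simp]: "PI * a = a" by (simp add: times_pauli_def)
lemma pm_PI2[simp]: "a * PI = a" by (cases a) (simp_all add: times_pauli_def)
lemma pm_self[simp]: "(a::pauli) * a = PI" by (cases a) (simp_all add: times_pauli_def)
lemma pm_eq_PI: "(a::pauli) * b = PI \<longleftrightarrow> a = b"
  by (cases a; cases b) (simp_all add: times_pauli_def)

lemma pid_apply[simp]: "pid i = PI" by (simp add: pid_def)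

lemma pmult_apply[simp]: "pmult A B i = A i * B i" by (simp add: pmult_def)

lemma pmult_pid[simp]: "pmult A pid = A" "pmult pid A = A"
  by (auto simp: pmult_def pid_def)
lemma pmult_self[simp]: "pmult A A = pid"
  by (auto simp: pmult_def pid_def)
lemma pmult_comm: "pmult A B = pmult B A"
  by (auto simp: pmult_def mult.commute)
lemma pmult_assoc: "pmult (pmult A B) C = pmult A (pmult B C)"
  by (auto simp: pmult_def mult.assoc)
lemma pmult_cancel[simp]: "pmult B (pmult B A) = A"
  by (simp flip: pmult_assoc)
lemma pmult_eq_pid: "pmult A B = pid \<longleftrightarrow> A = B"
  by (auto simp: pmult_def pid_def pm_eq_PI fun_eq_iff)

lemma supported_in_pmult:
  "A \<in> supported_in S \<Longrightarrow> B \<in> supported_in S \<Longrightarrow> pmult A B \<in> supported_in S"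
  by (rule supported_inI) (auto simp: supported_in_out)

lemma pid_supported[simp]: "pid \<in> supported_in S"
  by (simp add: supported_in_def supp_def)

lemma supp_finite: "finite S \<Longrightarrow> A \<in> supported_in S \<Longrightarrow> finite (supp A)"
  by (auto simp: supported_in_def intro: finite_subset)

lemma paulis_eq: "paulis n = supported_in {..<n}"
  by (simp add: paulis_def supported_in_def)

definition ac1 :: "pauli \<Rightarrow> pauli \<Rightarrow> bool" where
  "ac1 a c \<longleftrightarrow> a \<noteq> PI \<and> c \<noteq> PI \<and> a \<noteq> c"

lemma ac1_mult: "ac1 (a * b) c \<longleftrightarrow> (ac1 a c \<noteq> ac1 b c)"
  by (cases a; cases b; cases c) (simp_all add: ac1_def times_pauli_def)

lemma ac1_sym: "ac1 a c = ac1 c a" by (auto simp: ac1_def)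

lemma anticomm_ac1: "anticomm A B \<longleftrightarrow> odd (card {i. ac1 (A i) (B i)})"
  by (simp add: anticomm_def ac1_def)

lemma anticomm_sym: "anticomm A B = anticomm B A"
  by (simp add: anticomm_ac1 ac1_sym)

lemma odd_card_symdiff:
  assumes "finite X" "finite Y"
  shows "odd (card ((X - Y) \<union> (Y - X))) \<longleftrightarrow> (odd (card X) \<noteq> odd (card Y))"
proof -
  have 1: "card X = card (X - Y) + card (X \<inter> Y)"
    using card_Int_Diff[OF assms(1), of Y] by simp
  have 2: "card Y = card (Y - X) + card (X \<inter> Y)"
    using card_Int_Diff[OF assms(2), of X] by (simp add: Int_commute)
  have 3: "card ((X - Y) \<union> (Y - X)) = card (X - Y) + card (Y - X)"
    using assms by (intro card_Un_disjoint) auto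
  show ?thesis using 1 2 3 by auto
qed

lemma anticomm_pmult:
  assumes "finite (supp C)"
  shows "anticomm (pmult A B) C \<longleftrightarrow> (anticomm A C \<noteq> anticomm B C)"
proof -
  let ?X = "{i. ac1 (A i) (C i)}" and ?Y = "{i. ac1 (B i) (C i)}"
  have fx: "finite ?X" "finite ?Y"
    using assms by (auto intro: finite_subset[of _ "supp C"] simp: supp_def ac1_def)
  have "{i. ac1 (pmult A B i) (C i)} = (?X - ?Y) \<union> (?Y - ?X)"
    by (auto simp: ac1_mult)
  then show ?thesis using odd_card_symdiff[OF fx] by (simp add: anticomm_ac1)
qed

lemma comm_sign_pmult:
  assumes "finite (supp C)"
  shows "comm_sign (pmult A B) C = comm_sign A C * comm_sign B C"
  using anticomm_pmult[OF assms, of A B] by (auto simp: comm_sign_def)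

lemma comm_sign_sym: "comm_sign A B = comm_sign B A"
  by (simp add: comm_sign_def anticomm_sym)

lemma comm_sign_pmult2:
  assumes "finite (supp C)"
  shows "comm_sign C (pmult A B) = comm_sign C A * comm_sign C B"
  using comm_sign_pmult[OF assms] by (simp add: comm_sign_sym)

lemma anticomm_pid[simp]: "\<not> anticomm pid C" "\<not> anticomm C pid"
  by (simp_all add: anticomm_def)

lemma comm_sign_pid[simp]: "comm_sign pid C = 1" "comm_sign C pid = 1"
  by (simp_all add: comm_sign_def)

lemma comm_sign_sq[simp]: "comm_sign A B * comm_sign A B = 1"
  by (simp add: comm_sign_def)

lemma comm_sign_abs: "\<bar>comm_sign A B\<bar> = 1"
  by (simp add: comm_sign_def)

lemma anticomm_restr:
  assumes "e \<in> supported_in S"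
  shows "anticomm e (restr S A) = anticomm e A"
proof -
  have "{i. ac1 (e i) (restr S A i)} = {i. ac1 (e i) (A i)}"
    using assms by (auto simp: restr_def ac1_def supported_in_def supp_def)
  then show ?thesis by (simp add: anticomm_ac1)
qed

lemma comm_sign_restr:
  "e \<in> supported_in S \<Longrightarrow> comm_sign e (restr S A) = comm_sign e A"
  by (simp add: comm_sign_def anticomm_restr)

lemma restr_supported[simp]: "restr S A \<in> supported_in S"
  by (auto simp: restr_def supported_in_def supp_def)

lemma restr_id: "A \<in> supported_in S \<Longrightarrow> restr S A = A"
  unfolding restr_def fun_eq_iff by (auto simp: supported_in_out)

definition single :: "nat \<Rightarrow> pauli \<Rightarrow> npauli" where
  "single i b = (\<lambda>j. if j = i then b else PI)"

lemma exists_anticomm_single: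
  assumes "y i \<noteq> PI"
  shows "anticomm y (single i (if y i = PX then PZ else PX))"
proof -
  have "{j. ac1 (y j) (single i (if y i = PX then PZ else PX) j)} = {i}"
    using assms by (auto simp: single_def ac1_def split: if_splits)
  then show ?thesis by (simp add: anticomm_ac1)
qed

lemma single_supported: "i \<in> S \<Longrightarrow> single i b \<in> supported_in S"
  by (auto simp: single_def supported_in_def supp_def)

lemma sum_comm_sign_zero:
  assumes T: "finite T" and cl: "\<And>A. A \<in> T \<Longrightarrow> pmult B A \<in> T"
    and ac: "anticomm y B" and fy: "finite (supp y)"
  shows "(\<Sum>A\<in>T. comm_sign y A) = 0"
proof -
  have "(\<Sum>A\<in>T. comm_sign y A) = (\<Sum>A\<in>T. comm_sign y (pmult B A))"
    by (rule sum.reindex_bij_witness[where i="pmult B" and j="pmult B"]) (auto intro: cl)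
  also have "\<dots> = (\<Sum>A\<in>T. - comm_sign y A)"
  proof -
    have "comm_sign y B = -1" using ac by (simp add: comm_sign_def)
    then show ?thesis by (simp add: comm_sign_pmult2[OF fy])
  qed
  finally show ?thesis by (simp add: sum_negf)
qed

lemma supp_pmult: "supp (pmult x y) \<subseteq> supp x \<union> supp y"
  by (auto simp: supp_def)

lemma finite_supp_pmult: "finite (supp x) \<Longrightarrow> finite (supp y) \<Longrightarrow> finite (supp (pmult x y))"
  by (meson finite_UnI finite_subset supp_pmult)

lemma comm_sign_prod_pmult:
  assumes "finite (supp e)"
  shows "comm_sign e B * comm_sign e C = comm_sign (pmult B C) e"
  by (metis comm_sign_pmult2[OF assms] comm_sign_sym)

lemma exists_nonPI: "y \<noteq> pid \<Longrightarrow> \<exists>i. y i \<noteq> PI"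
  by (auto simp: pid_def fun_eq_iff)

lemma ortho_V:
  assumes S: "finite S" and B: "B \<in> supported_in S" and C: "C \<in> supported_in S"
  shows "(\<Sum>e\<in>supported_in S. comm_sign e B * comm_sign e C)
          = (if B = C then real (card (supported_in S)) else 0)"
proof -
  have fV: "finite (supported_in S)" using finite_supported_in[OF S] .
  have "(\<Sum>e\<in>supported_in S. comm_sign e B * comm_sign e C)
        = (\<Sum>e\<in>supported_in S. comm_sign (pmult B C) e)"
    by (rule sum.cong) (auto intro: comm_sign_prod_pmult supp_finite[OF S])
  also have "\<dots> = (if B = C then real (card (supported_in S)) else 0)"
  proof (cases "B = C")
    case True then show ?thesis by simp
  next
    case False
    let ?y = "pmult B C"
    have y: "?y \<in> supported_in S" using B C by (rule supported_in_pmult)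
    have "?y \<noteq> pid" using False by (simp add: pmult_eq_pid)
    then obtain i where i: "?y i \<noteq> PI" using exists_nonPI by blast
    then have iS: "i \<in> S" using supported_in_out[OF y] by blast
    let ?B = "single i (if ?y i = PX then PZ else PX)"
    have "(\<Sum>e\<in>supported_in S. comm_sign ?y e) = 0"
      using exists_anticomm_single[of "?y" i] i
      by (intro sum_comm_sign_zero[where B="?B"])
        (auto intro: fV supported_in_pmult single_supported[OF iS] supp_finite[OF S y])
    then show ?thesis using False by simp
  qed
  finally show ?thesis .
qed

lemma card_V_pos: "finite S \<Longrightarrow> card (supported_in S) > 0"
  using finite_supported_in card_gt_0_iff pid_supported by blast

lemma fourier_inv:
  assumes S: "finite S" and x: "x \<in> supported_in S"
  shows "(\<Sum>A\<in>supported_in S. (\<Sum>e\<in>supported_in S. g e * comm_sign e A) * comm_sign x A)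
         = real (card (supported_in S)) * g x"
proof -
  let ?V = "supported_in S"
  have "(\<Sum>A\<in>?V. (\<Sum>e\<in>?V. g e * comm_sign e A) * comm_sign x A)
      = (\<Sum>A\<in>?V. \<Sum>e\<in>?V. g e * (comm_sign A e * comm_sign A x))"
    by (simp add: sum_distrib_right comm_sign_sym mult.assoc)
  also have "\<dots> = (\<Sum>e\<in>?V. g e * (\<Sum>A\<in>?V. comm_sign A e * comm_sign A x))"
    by (subst sum.swap) (simp add: sum_distrib_left)
  also have "\<dots> = (\<Sum>e\<in>?V. g e * (if e = x then real (card ?V) else 0))"
    by (rule sum.cong) (auto simp: ortho_V[OF S _ x])
  also have "\<dots> = real (card ?V) * g x"
    using x by (simp add: sum.delta' finite_supported_in[OF S] if_distrib cong: if_cong)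
  finally show ?thesis .
qed

lemma fourier_unique:
  assumes S: "finite S"
    and g: "\<And>x. x \<notin> supported_in S \<Longrightarrow> g x = 0"
    and g': "\<And>x. x \<notin> supported_in S \<Longrightarrow> g' x = 0"
    and eq: "\<And>A. A \<in> supported_in S \<Longrightarrow>
       (\<Sum>e\<in>supported_in S. g e * comm_sign e A) = (\<Sum>e\<in>supported_in S. g' e * comm_sign e A)"
  shows "g = g'"
proof
  fix x
  show "g x = g' x"
  proof (cases "x \<in> supported_in S")
    case True
    have "real (card (supported_in S)) * g x = real (card (supported_in S)) * g' x"
      using fourier_inv[OF S True, of g] fourier_inv[OF S True, of g'] eq
      by (metis (no_types, lifting) sum.cong)
    then show ?thesis using card_V_pos[OF S] by simp
  next
    case False then show ?thesis using g g' by simp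
  qed
qed

lemma fourier_expand:
  assumes S: "finite S" and f: "\<And>A. f A = f (restr S A)"
  shows "f A = (\<Sum>e\<in>supported_in S.
            ((\<Sum>B\<in>supported_in S. f B * comm_sign e B) / real (card (supported_in S))) * comm_sign e A)"
proof -
  let ?V = "supported_in S" let ?N = "real (card ?V)"
  have N: "?N > 0" using card_V_pos[OF S] by simp
  have "(\<Sum>e\<in>?V. ((\<Sum>B\<in>?V. f B * comm_sign e B) / ?N) * comm_sign e A)
      = (\<Sum>e\<in>?V. \<Sum>B\<in>?V. f B * (comm_sign e B * comm_sign e (restr S A)) / ?N)"
    by (auto intro!: sum.cong simp: sum_divide_distrib sum_distrib_right comm_sign_restr mult.assoc)
  also have "\<dots> = (\<Sum>B\<in>?V. f B * (\<Sum>e\<in>?V. comm_sign e B * comm_sign e (restr S A)) / ?N)"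
    by (subst sum.swap) (simp add: sum_distrib_left sum_divide_distrib)
  also have "\<dots> = (\<Sum>B\<in>?V. f B * (if B = restr S A then ?N else 0) / ?N)"
    by (rule sum.cong) (auto simp: ortho_V[OF S])
  also have "\<dots> = (\<Sum>B\<in>?V. if B = restr S A then f B else 0)"
    using N by (intro sum.cong) auto
  also have "\<dots> = f (restr S A)"
    by (simp add: sum.delta' finite_supported_in[OF S])
  finally show ?thesis using f[of A] by simp
qed

lemma syndrome_pid: "syndrome M pid = trivial_syndrome"
  by (simp add: syndrome_def trivial_syndrome_def fun_eq_iff)

lemma syndrome_eq_iff: "syndrome M x = syndrome M y \<longleftrightarrow> (\<forall>m\<in>M. anticomm x m = anticomm y m)"
  by (auto simp: syndrome_def fun_eq_iff)

lemma subgroup_finite: "pauli_subgroup n M \<Longrightarrow> finite M"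
  unfolding pauli_subgroup_def paulis_eq
  using finite_supported_in[of "{..<n}"] finite_subset by blast

lemma subgroup_supp: "pauli_subgroup n M \<Longrightarrow> m \<in> M \<Longrightarrow> finite (supp m)"
  unfolding pauli_subgroup_def paulis_eq by (auto intro: supp_finite)

lemma syn_ortho:
  assumes M: "pauli_subgroup n M" and fx: "finite (supp x)" and fy: "finite (supp y)"
  shows "(\<Sum>m\<in>M. comm_sign x m * comm_sign y m)
        = (if syndrome M x = syndrome M y then real (card M) else 0)"
proof (cases "syndrome M x = syndrome M y")
  case True
  then have "\<forall>m\<in>M. anticomm x m = anticomm y m" by (simp add: syndrome_eq_iff)
  then have "(\<Sum>m\<in>M. comm_sign x m * comm_sign y m) = (\<Sum>m\<in>M. 1)"
    by (intro sum.cong) (auto simp: comm_sign_def)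
  then show ?thesis using True by simp
next
  case False
  then obtain m0 where m0: "m0 \<in> M" "anticomm x m0 \<noteq> anticomm y m0"
    by (auto simp: syndrome_eq_iff)
  have "(\<Sum>m\<in>M. comm_sign x m * comm_sign y m) = (\<Sum>m\<in>M. comm_sign (pmult x y) m)"
    by (rule sum.cong) (auto simp: comm_sign_pmult subgroup_supp[OF M])
  also have "\<dots> = 0"
  proof (rule sum_comm_sign_zero[where B=m0])
    show "finite M" using subgroup_finite[OF M] .
    show "\<And>A. A \<in> M \<Longrightarrow> pmult m0 A \<in> M" using M m0(1) by (auto simp: pauli_subgroup_def)
    show "anticomm (pmult x y) m0" using m0 by (simp add: anticomm_pmult subgroup_supp[OF M])
    show "finite (supp (pmult x y))" using fx fy by (rule finite_supp_pmult)
  qed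
  finally show ?thesis using False by simp
qed

definition lam :: "(nat set \<Rightarrow> npauli \<Rightarrow> real) \<Rightarrow> nat set \<Rightarrow> npauli \<Rightarrow> real" where
  "lam P \<gamma> A = (\<Sum>e\<in>supported_in \<gamma>. P \<gamma> e * comm_sign e A)"

lemma supported_in_mono: "S \<subseteq> T \<Longrightarrow> supported_in S \<subseteq> supported_in T"
  by (auto simp: supported_in_def)

lemma adm_nonneg: "admissible \<Gamma> P \<Longrightarrow> \<gamma> \<in> \<Gamma> \<Longrightarrow> P \<gamma> e \<ge> 0"
  by (simp add: admissible_def)
lemma adm_out: "admissible \<Gamma> P \<Longrightarrow> \<gamma> \<in> \<Gamma> \<Longrightarrow> e \<notin> supported_in \<gamma> \<Longrightarrow> P \<gamma> e = 0"
  by (simp add: admissible_def)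
lemma adm_sum: "admissible \<Gamma> P \<Longrightarrow> \<gamma> \<in> \<Gamma> \<Longrightarrow> (\<Sum>e\<in>supported_in \<gamma>. P \<gamma> e) = 1"
  by (simp add: admissible_def)
lemma adm_pid: "admissible \<Gamma> P \<Longrightarrow> \<gamma> \<in> \<Gamma> \<Longrightarrow> P \<gamma> pid > 1/2"
  by (simp add: admissible_def)
lemma adm_pos: "admissible \<Gamma> P \<Longrightarrow> \<gamma> \<in> \<Gamma> \<Longrightarrow> e \<in> errs \<gamma> \<Longrightarrow> P \<gamma> e > 0"
  by (simp add: admissible_def)

lemma errs_eq: "errs \<gamma> = supported_in \<gamma> - {pid}"
  by (simp add: errs_def)

lemma sum_V_split:
  assumes "finite \<gamma>"
  shows "(\<Sum>e\<in>supported_in \<gamma>. g e) = g pid + (\<Sum>e\<in>errs \<gamma>. g e)"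
  unfolding errs_eq using assms
  by (simp add: sum.remove[OF finite_supported_in[OF assms] pid_supported])

lemma adm_errs_sum:
  "admissible \<Gamma> P \<Longrightarrow> \<gamma> \<in> \<Gamma> \<Longrightarrow> finite \<gamma> \<Longrightarrow> (\<Sum>e\<in>errs \<gamma>. P \<gamma> e) = 1 - P \<gamma> pid"
  using sum_V_split[of \<gamma> "P \<gamma>"] adm_sum[of \<Gamma> P \<gamma>] by simp

lemma lam_pid: "admissible \<Gamma> P \<Longrightarrow> \<gamma> \<in> \<Gamma> \<Longrightarrow> lam P \<gamma> pid = 1"
  by (simp add: lam_def adm_sum)

lemma lam_restr: "lam P \<gamma> A = lam P \<gamma> (restr \<gamma> A)"
  unfolding lam_def by (rule sum.cong) (auto simp: comm_sign_restr)

lemma lam_lower: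
  assumes "admissible \<Gamma> P" "\<gamma> \<in> \<Gamma>" "finite \<gamma>"
  shows "lam P \<gamma> A \<ge> 2 * P \<gamma> pid - 1"
proof -
  have "lam P \<gamma> A = P \<gamma> pid + (\<Sum>e\<in>errs \<gamma>. P \<gamma> e * comm_sign e A)"
    unfolding lam_def by (simp add: sum_V_split[OF assms(3)])
  moreover have "(\<Sum>e\<in>errs \<gamma>. P \<gamma> e * comm_sign e A) \<ge> (\<Sum>e\<in>errs \<gamma>. - P \<gamma> e)"
    by (rule sum_mono) (auto simp: comm_sign_def adm_nonneg[OF assms(1,2)])
  moreover have "(\<Sum>e\<in>errs \<gamma>. - P \<gamma> e) = P \<gamma> pid - 1"
    using adm_errs_sum[OF assms] by (simp add: sum_negf)
  ultimately show ?thesis by linarith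
qed

lemma lam_pos:
  assumes "admissible \<Gamma> P" "\<gamma> \<in> \<Gamma>" "finite \<gamma>"
  shows "lam P \<gamma> A > 0"
  using lam_lower[OF assms, of A] adm_pid[OF assms(1,2)] by linarith

lemma lam_le1:
  assumes "admissible \<Gamma> P" "\<gamma> \<in> \<Gamma>"
  shows "lam P \<gamma> A \<le> 1"
proof -
  have "lam P \<gamma> A \<le> (\<Sum>e\<in>supported_in \<gamma>. P \<gamma> e)"
    unfolding lam_def
    by (rule sum_mono) (auto simp: comm_sign_def adm_nonneg[OF assms])
  then show ?thesis using adm_sum[OF assms] by simp
qed

lemma pprod_empty[simp]: "pprod f {} = pid"
  by (simp add: pprod_def pid_def one_pauli_def)

lemma pprod_insert: "finite G \<Longrightarrow> x \<notin> G \<Longrightarrow> pprod f (insert x G) = pmult (f x) (pprod f G)"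
  by (simp add: pprod_def pmult_def)

lemma pprod_supported:
  assumes "finite G" "\<And>g. g \<in> G \<Longrightarrow> f g \<in> supported_in S"
  shows "pprod f G \<in> supported_in S"
  using assms by (induction G rule: finite_induct) (auto simp: pprod_insert intro: supported_in_pmult)

lemma comm_sign_pprod:
  assumes "finite G" "finite (supp C)"
  shows "comm_sign (pprod f G) C = (\<Prod>g\<in>G. comm_sign (f g) C)"
  using assms by (induction G rule: finite_induct) (auto simp: pprod_insert comm_sign_pmult)

lemma total_dist_out:
  assumes fin: "finite \<Gamma>" and sup: "\<forall>\<gamma>\<in>\<Gamma>. \<gamma> \<subseteq> {..<n}" and e: "e \<notin> paulis n"
  shows "total_dist \<Gamma> P e = 0"
  unfolding total_dist_def
proof (rule sum.neutral, intro ballI)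
  fix f assume f: "f \<in> (\<Pi>\<^sub>E \<gamma>\<in>\<Gamma>. supported_in \<gamma>)"
  have "pprod f \<Gamma> \<in> paulis n" unfolding paulis_eq
    using f sup by (intro pprod_supported[OF fin]) (auto dest: supported_in_mono)
  then show "(if pprod f \<Gamma> = e then \<Prod>\<gamma>\<in>\<Gamma>. P \<gamma> (f \<gamma>) else 0) = 0" using e by auto
qed

lemma convolution:
  assumes fin: "finite \<Gamma>" and sup: "\<forall>\<gamma>\<in>\<Gamma>. \<gamma> \<subseteq> {..<n}" and A: "finite (supp A)"
  shows "(\<Sum>e\<in>paulis n. total_dist \<Gamma> P e * comm_sign e A) = (\<Prod>\<gamma>\<in>\<Gamma>. lam P \<gamma> A)"
proof -
  let ?F = "\<Pi>\<^sub>E \<gamma>\<in>\<Gamma>. supported_in \<gamma>"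
  let ?w = "\<lambda>f. \<Prod>\<gamma>\<in>\<Gamma>. P \<gamma> (f \<gamma>)"
  have fg: "\<And>\<gamma>. \<gamma> \<in> \<Gamma> \<Longrightarrow> finite \<gamma>" using sup finite_subset by blast
  have fF: "finite ?F" using fin fg by (intro finite_PiE) (auto intro: finite_supported_in)
  have fP: "finite (paulis n)" unfolding paulis_eq by (rule finite_supported_in) simp
  have inP: "\<And>f. f \<in> ?F \<Longrightarrow> pprod f \<Gamma> \<in> paulis n" unfolding paulis_eq
    using sup by (intro pprod_supported[OF fin]) (auto dest: supported_in_mono)
  have "(\<Sum>e\<in>paulis n. total_dist \<Gamma> P e * comm_sign e A)
     = (\<Sum>e\<in>paulis n. \<Sum>f\<in>?F. if pprod f \<Gamma> = e then ?w f * comm_sign e A else 0)"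
    unfolding total_dist_def sum_distrib_right by (intro sum.cong) auto
  also have "\<dots> = (\<Sum>f\<in>?F. \<Sum>e\<in>paulis n. if pprod f \<Gamma> = e then ?w f * comm_sign e A else 0)"
    by (rule sum.swap)
  also have "\<dots> = (\<Sum>f\<in>?F. ?w f * comm_sign (pprod f \<Gamma>) A)"
    by (rule sum.cong) (auto simp: sum.delta fP inP)
  also have "\<dots> = (\<Sum>f\<in>?F. \<Prod>\<gamma>\<in>\<Gamma>. P \<gamma> (f \<gamma>) * comm_sign (f \<gamma>) A)"
    by (rule sum.cong) (auto simp: comm_sign_pprod[OF fin A] prod.distrib)
  also have "\<dots> = (\<Prod>\<gamma>\<in>\<Gamma>. lam P \<gamma> A)"
    unfolding lam_def using fin fg
    by (subst prod_sum_PiE) (auto intro: finite_supported_in)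
  finally show ?thesis .
qed

lemma synd_exp_prod:
  assumes fin: "finite \<Gamma>" and sup: "\<forall>\<gamma>\<in>\<Gamma>. \<gamma> \<subseteq> {..<n}" and A: "finite (supp A)"
  shows "synd_exp n \<Gamma> P A = (\<Prod>\<gamma>\<in>\<Gamma>. lam P \<gamma> A)"
  unfolding synd_exp_def using convolution[OF assms] .

lemma finite_gamma:
  fixes n :: nat
  assumes "\<forall>\<gamma>\<in>\<Gamma>. \<gamma> \<subseteq> {..<n}" "\<gamma> \<in> \<Gamma>" shows "finite \<gamma>"
proof -
  have "\<gamma> \<subseteq> {..<n}" using assms by blast
  then show ?thesis by (rule finite_subset) simp
qed

lemma ln_lam_restr: "ln (lam P \<gamma> A) = ln (lam P \<gamma> (restr \<gamma> A))"
  by (rule arg_cong[OF lam_restr])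

lemma ln_lam_expand:
  assumes "finite \<gamma>"
  shows "ln (lam P \<gamma> A) = (\<Sum>e\<in>supported_in \<gamma>.
     ((\<Sum>B\<in>supported_in \<gamma>. ln (lam P \<gamma> B) * comm_sign e B) / real (card (supported_in \<gamma>))) * comm_sign e A)"
  by (rule fourier_expand[OF assms, where f="\<lambda>A. ln (lam P \<gamma> A)"]) (rule ln_lam_restr)

lemma ifmult: "(x::real) * (if c then N else 0) = N * (if c then x else 0)"
  by simp

lemma coeff_extract:
  assumes M: "pauli_subgroup n \<M>" and fin: "finite \<Gamma>" and sup: "\<forall>\<gamma>\<in>\<Gamma>. \<gamma> \<subseteq> {..<n}"
    and fe0: "finite (supp e0)"
  shows "(\<Sum>m\<in>\<M>. (\<Sum>\<gamma>\<in>\<Gamma>. \<Sum>e\<in>supported_in \<gamma>. d \<gamma> e * comm_sign e m) * comm_sign e0 m)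
       = real (card \<M>) * (\<Sum>\<gamma>\<in>\<Gamma>. \<Sum>e\<in>supported_in \<gamma>. if syndrome \<M> e = syndrome \<M> e0 then d \<gamma> e else 0)"
proof -
  have "(\<Sum>m\<in>\<M>. (\<Sum>\<gamma>\<in>\<Gamma>. \<Sum>e\<in>supported_in \<gamma>. d \<gamma> e * comm_sign e m) * comm_sign e0 m)
      = (\<Sum>\<gamma>\<in>\<Gamma>. \<Sum>e\<in>supported_in \<gamma>. d \<gamma> e * (\<Sum>m\<in>\<M>. comm_sign e m * comm_sign e0 m))"
  proof -
    have "(\<Sum>m\<in>\<M>. (\<Sum>\<gamma>\<in>\<Gamma>. \<Sum>e\<in>supported_in \<gamma>. d \<gamma> e * comm_sign e m) * comm_sign e0 m)
      = (\<Sum>m\<in>\<M>. \<Sum>\<gamma>\<in>\<Gamma>. \<Sum>e\<in>supported_in \<gamma>. d \<gamma> e * (comm_sign e m * comm_sign e0 m))"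
      by (simp only: sum_distrib_right mult.assoc)
    also have "\<dots> = (\<Sum>\<gamma>\<in>\<Gamma>. \<Sum>m\<in>\<M>. \<Sum>e\<in>supported_in \<gamma>. d \<gamma> e * (comm_sign e m * comm_sign e0 m))"
      by (rule sum.swap)
    also have "\<dots> = (\<Sum>\<gamma>\<in>\<Gamma>. \<Sum>e\<in>supported_in \<gamma>. \<Sum>m\<in>\<M>. d \<gamma> e * (comm_sign e m * comm_sign e0 m))"
      by (rule sum.cong[OF refl], rule sum.swap)
    finally show ?thesis by (simp only: sum_distrib_left)
  qed
  also have "\<dots> = (\<Sum>\<gamma>\<in>\<Gamma>. \<Sum>e\<in>supported_in \<gamma>. d \<gamma> e * (if syndrome \<M> e = syndrome \<M> e0 then real (card \<M>) else 0))"
  proof (intro sum.cong refl)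
    fix \<gamma> e assume g: "\<gamma> \<in> \<Gamma>" and e: "e \<in> supported_in \<gamma>"
    have fe: "finite (supp e)" using supp_finite[OF finite_gamma[OF sup g] e] .
    show "d \<gamma> e * (\<Sum>m\<in>\<M>. comm_sign e m * comm_sign e0 m)
        = d \<gamma> e * (if syndrome \<M> e = syndrome \<M> e0 then real (card \<M>) else 0)"
      by (simp only: syn_ortho[OF M fe fe0])
  qed
  also have "\<dots> = real (card \<M>) * (\<Sum>\<gamma>\<in>\<Gamma>. \<Sum>e\<in>supported_in \<gamma>. if syndrome \<M> e = syndrome \<M> e0 then d \<gamma> e else 0)"
    unfolding sum_distrib_left by (intro sum.cong refl) (rule ifmult)
  finally show ?thesis .
qed

lemma log_coeffs:
  assumes M: "pauli_subgroup n \<M>" and fin: "finite \<Gamma>" and sup: "\<forall>\<gamma>\<in>\<Gamma>. \<gamma> \<subseteq> {..<n}"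
    and P: "admissible \<Gamma> P" and P': "admissible \<Gamma> P'"
    and eq: "\<forall>m\<in>\<M>. synd_exp n \<Gamma> P m = synd_exp n \<Gamma> P' m"
  obtains d where
    "\<And>\<gamma> A. \<gamma> \<in> \<Gamma> \<Longrightarrow> ln (lam P \<gamma> A) - ln (lam P' \<gamma> A) = (\<Sum>e\<in>supported_in \<gamma>. d \<gamma> e * comm_sign e A)"
    "\<And>e0. finite (supp e0) \<Longrightarrow>
       (\<Sum>\<gamma>\<in>\<Gamma>. \<Sum>e\<in>supported_in \<gamma>. if syndrome \<M> e = syndrome \<M> e0 then d \<gamma> e else 0) = 0"
proof -
  define c where "c Q \<gamma> e = (\<Sum>B\<in>supported_in \<gamma>. ln (lam Q \<gamma> B) * comm_sign e B) / real (card (supported_in \<gamma>))" for Q \<gamma> e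
  define d where "d \<gamma> e = c P \<gamma> e - c P' \<gamma> e" for \<gamma> e
  have 1: "ln (lam P \<gamma> A) - ln (lam P' \<gamma> A) = (\<Sum>e\<in>supported_in \<gamma>. d \<gamma> e * comm_sign e A)"
    if "\<gamma> \<in> \<Gamma>" for \<gamma> A
    using ln_lam_expand[OF finite_gamma[OF sup that], of P A] ln_lam_expand[OF finite_gamma[OF sup that], of P' A]
    by (simp add: d_def c_def left_diff_distrib sum_subtractf)
  have D0: "(\<Sum>\<gamma>\<in>\<Gamma>. \<Sum>e\<in>supported_in \<gamma>. d \<gamma> e * comm_sign e m) = 0" if m: "m \<in> \<M>" for m
  proof -
    have fm: "finite (supp m)" using subgroup_supp[OF M m] .
    have "(\<Prod>\<gamma>\<in>\<Gamma>. lam P \<gamma> m) = (\<Prod>\<gamma>\<in>\<Gamma>. lam P' \<gamma> m)"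
      using eq m synd_exp_prod[OF fin sup fm, of P] synd_exp_prod[OF fin sup fm, of P'] by simp
    then have "ln (\<Prod>\<gamma>\<in>\<Gamma>. lam P \<gamma> m) = ln (\<Prod>\<gamma>\<in>\<Gamma>. lam P' \<gamma> m)" by simp
    then have "(\<Sum>\<gamma>\<in>\<Gamma>. ln (lam P \<gamma> m)) = (\<Sum>\<gamma>\<in>\<Gamma>. ln (lam P' \<gamma> m))"
    proof -
      have p1: "\<forall>\<gamma>\<in>\<Gamma>. lam P \<gamma> m > 0" using lam_pos[OF P _ finite_gamma[OF sup]] by blast
      have p2: "\<forall>\<gamma>\<in>\<Gamma>. lam P' \<gamma> m > 0" using lam_pos[OF P' _ finite_gamma[OF sup]] by blast
      have "ln (\<Prod>\<gamma>\<in>\<Gamma>. lam P \<gamma> m) = (\<Sum>\<gamma>\<in>\<Gamma>. ln (lam P \<gamma> m))"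
        using p1 by (intro ln_prod[OF fin]) auto
      moreover have "ln (\<Prod>\<gamma>\<in>\<Gamma>. lam P' \<gamma> m) = (\<Sum>\<gamma>\<in>\<Gamma>. ln (lam P' \<gamma> m))"
        using p2 by (intro ln_prod[OF fin]) auto
      ultimately show ?thesis using \<open>ln (\<Prod>\<gamma>\<in>\<Gamma>. lam P \<gamma> m) = ln (\<Prod>\<gamma>\<in>\<Gamma>. lam P' \<gamma> m)\<close> by simp
    qed
    then have "(\<Sum>\<gamma>\<in>\<Gamma>. ln (lam P \<gamma> m) - ln (lam P' \<gamma> m)) = 0" by (simp add: sum_subtractf)
    then show ?thesis using 1 by simp
  qed
  have 2: "(\<Sum>\<gamma>\<in>\<Gamma>. \<Sum>e\<in>supported_in \<gamma>. if syndrome \<M> e = syndrome \<M> e0 then d \<gamma> e else 0) = 0"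
    if fe0: "finite (supp e0)" for e0
  proof -
    have "real (card \<M>) * (\<Sum>\<gamma>\<in>\<Gamma>. \<Sum>e\<in>supported_in \<gamma>. if syndrome \<M> e = syndrome \<M> e0 then d \<gamma> e else 0)
       = (\<Sum>m\<in>\<M>. (\<Sum>\<gamma>\<in>\<Gamma>. \<Sum>e\<in>supported_in \<gamma>. d \<gamma> e * comm_sign e m) * comm_sign e0 m)"
      using coeff_extract[OF M fin sup fe0] by simp
    also have "\<dots> = 0" using D0 by simp
    finally have "real (card \<M>) * (\<Sum>\<gamma>\<in>\<Gamma>. \<Sum>e\<in>supported_in \<gamma>. if syndrome \<M> e = syndrome \<M> e0 then d \<gamma> e else 0) = 0" .
    moreover have "card \<M> > 0"
      using M subgroup_finite[OF M] unfolding pauli_subgroup_def by (metis card_gt_0_iff empty_iff)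
    ultimately show ?thesis by simp
  qed
  show ?thesis by (rule that[OF 1 2])
qed

lemma prod_lam_eq:
  assumes fin: "finite \<Gamma>" and sup: "\<forall>\<gamma>\<in>\<Gamma>. \<gamma> \<subseteq> {..<n}"
    and P: "admissible \<Gamma> P" and P': "admissible \<Gamma> P'"
    and eq: "(\<Sum>\<gamma>\<in>\<Gamma>. ln (lam P \<gamma> A) - ln (lam P' \<gamma> A)) = 0"
  shows "(\<Prod>\<gamma>\<in>\<Gamma>. lam P \<gamma> A) = (\<Prod>\<gamma>\<in>\<Gamma>. lam P' \<gamma> A)"
proof -
  have "(\<Sum>\<gamma>\<in>\<Gamma>. ln (lam P \<gamma> A)) = (\<Sum>\<gamma>\<in>\<Gamma>. ln (lam P' \<gamma> A))"
    using eq by (simp add: sum_subtractf)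
  then have "exp (\<Sum>\<gamma>\<in>\<Gamma>. ln (lam P \<gamma> A)) = exp (\<Sum>\<gamma>\<in>\<Gamma>. ln (lam P' \<gamma> A))" by simp
  moreover have "exp (\<Sum>\<gamma>\<in>\<Gamma>. ln (lam Q \<gamma> A)) = (\<Prod>\<gamma>\<in>\<Gamma>. lam Q \<gamma> A)" if Q: "admissible \<Gamma> Q" for Q
  proof -
    have "exp (\<Sum>\<gamma>\<in>\<Gamma>. ln (lam Q \<gamma> A)) = (\<Prod>\<gamma>\<in>\<Gamma>. exp (ln (lam Q \<gamma> A)))"
      using fin by (simp add: exp_sum)
    also have "\<dots> = (\<Prod>\<gamma>\<in>\<Gamma>. lam Q \<gamma> A)"
      by (rule prod.cong[OF refl]) (simp add: lam_pos[OF Q _ finite_gamma[OF sup]])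
    finally show ?thesis .
  qed
  ultimately show ?thesis using P P' by simp
qed

lemma total_dist_eq_from_prod:
  assumes fin: "finite \<Gamma>" and sup: "\<forall>\<gamma>\<in>\<Gamma>. \<gamma> \<subseteq> {..<n}"
    and eq: "\<And>A. A \<in> paulis n \<Longrightarrow> (\<Prod>\<gamma>\<in>\<Gamma>. lam P \<gamma> A) = (\<Prod>\<gamma>\<in>\<Gamma>. lam P' \<gamma> A)"
  shows "total_dist \<Gamma> P = total_dist \<Gamma> P'"
proof (rule fourier_unique[of "{..<n}"])
  show "finite {..<n}" by simp
  show "\<And>x. x \<notin> supported_in {..<n} \<Longrightarrow> total_dist \<Gamma> P x = 0"
    using total_dist_out[OF fin sup] by (simp add: paulis_eq)
  show "\<And>x. x \<notin> supported_in {..<n} \<Longrightarrow> total_dist \<Gamma> P' x = 0"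
    using total_dist_out[OF fin sup] by (simp add: paulis_eq)
  fix A assume A: "A \<in> supported_in {..<n}"
  then have fA: "finite (supp A)" by (intro supp_finite[of "{..<n}"]) auto
  show "(\<Sum>e\<in>supported_in {..<n}. total_dist \<Gamma> P e * comm_sign e A) =
        (\<Sum>e\<in>supported_in {..<n}. total_dist \<Gamma> P' e * comm_sign e A)"
    using convolution[OF fin sup fA, of P] convolution[OF fin sup fA, of P'] eq[of A] A
    by (simp add: paulis_eq)
qed

lemma part1_if:
  assumes M: "pauli_subgroup n \<M>" and fin: "finite \<Gamma>" and sup: "\<forall>\<gamma>\<in>\<Gamma>. \<gamma> \<subseteq> {..<n}"
    and U: "\<forall>e\<in>errs_union \<Gamma>. syndrome \<M> e \<noteq> trivial_syndrome \<and>
           (\<forall>e'\<in>errs_union \<Gamma>. e' \<noteq> e \<longrightarrow> syndrome \<M> e' \<noteq> syndrome \<M> e)"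
    and P: "admissible \<Gamma> P" and P': "admissible \<Gamma> P'"
    and eq: "\<forall>m\<in>\<M>. synd_exp n \<Gamma> P m = synd_exp n \<Gamma> P' m"
  shows "total_dist \<Gamma> P = total_dist \<Gamma> P'"
proof -
  obtain d where d1: "\<And>\<gamma> A. \<gamma> \<in> \<Gamma> \<Longrightarrow> ln (lam P \<gamma> A) - ln (lam P' \<gamma> A) = (\<Sum>e\<in>supported_in \<gamma>. d \<gamma> e * comm_sign e A)"
    and d2: "\<And>e0. finite (supp e0) \<Longrightarrow>
       (\<Sum>\<gamma>\<in>\<Gamma>. \<Sum>e\<in>supported_in \<gamma>. if syndrome \<M> e = syndrome \<M> e0 then d \<gamma> e else 0) = 0"
    using log_coeffs[OF M fin sup P P' eq] by blast
  define W where "W = errs_union \<Gamma> \<union> {pid}"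
  have fg: "\<And>\<gamma>. \<gamma> \<in> \<Gamma> \<Longrightarrow> finite \<gamma>" using finite_gamma[OF sup] by blast
  have VW: "supported_in \<gamma> \<subseteq> W" if "\<gamma> \<in> \<Gamma>" for \<gamma>
    using that by (auto simp: W_def errs_union_def errs_def)
  have Wsub: "W \<subseteq> paulis n"
    using sup by (auto simp: W_def errs_union_def errs_def paulis_eq dest!: supported_in_mono)
  have fW: "finite W"
    using Wsub finite_supported_in[of "{..<n}"] by (auto simp: paulis_eq intro: finite_subset)
  have synW: "syndrome \<M> e = syndrome \<M> e0 \<longleftrightarrow> e = e0"
    if e0: "e0 \<in> W" and e: "e \<in> supported_in \<gamma>" and g: "\<gamma> \<in> \<Gamma>" for e e0 \<gamma>
  proof -
    have eW: "e \<in> W" using VW[OF g] e by blast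
    show ?thesis
    proof
      assume s: "syndrome \<M> e = syndrome \<M> e0"
      show "e = e0"
      proof (rule ccontr)
        assume ne: "e \<noteq> e0"
        consider "e = pid" "e0 \<in> errs_union \<Gamma>" | "e0 = pid" "e \<in> errs_union \<Gamma>"
          | "e \<in> errs_union \<Gamma>" "e0 \<in> errs_union \<Gamma>"
          using eW e0 ne unfolding W_def by blast
        then show False
          using U s ne by cases (auto simp: syndrome_pid)
      qed
    qed simp
  qed
  have z: "(\<Sum>\<gamma>\<in>\<Gamma>. if e0 \<in> supported_in \<gamma> then d \<gamma> e0 else 0) = 0" if e0: "e0 \<in> W" for e0
  proof -
    have fe0: "finite (supp e0)" using e0 Wsub by (auto simp: paulis_eq intro: supp_finite[of "{..<n}"])
    have "(\<Sum>\<gamma>\<in>\<Gamma>. \<Sum>e\<in>supported_in \<gamma>. if syndrome \<M> e = syndrome \<M> e0 then d \<gamma> e else 0)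
        = (\<Sum>\<gamma>\<in>\<Gamma>. \<Sum>e\<in>supported_in \<gamma>. if e = e0 then d \<gamma> e else 0)"
      by (intro sum.cong refl) (simp add: synW[OF e0])
    also have "\<dots> = (\<Sum>\<gamma>\<in>\<Gamma>. if e0 \<in> supported_in \<gamma> then d \<gamma> e0 else 0)"
      by (intro sum.cong refl) (simp add: sum.delta' finite_supported_in[OF fg])
    finally show ?thesis using d2[OF fe0] by simp
  qed
  have D: "(\<Sum>\<gamma>\<in>\<Gamma>. ln (lam P \<gamma> A) - ln (lam P' \<gamma> A)) = 0" for A
  proof -
    have "(\<Sum>\<gamma>\<in>\<Gamma>. ln (lam P \<gamma> A) - ln (lam P' \<gamma> A))
        = (\<Sum>\<gamma>\<in>\<Gamma>. \<Sum>e\<in>supported_in \<gamma>. d \<gamma> e * comm_sign e A)"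
      by (rule sum.cong[OF refl]) (rule d1)
    also have "\<dots> = (\<Sum>\<gamma>\<in>\<Gamma>. \<Sum>e\<in>W. if e \<in> supported_in \<gamma> then d \<gamma> e * comm_sign e A else 0)"
    proof (rule sum.cong[OF refl])
      fix \<gamma> assume g: "\<gamma> \<in> \<Gamma>"
      have "(\<Sum>e\<in>W. if e \<in> supported_in \<gamma> then d \<gamma> e * comm_sign e A else 0)
          = (\<Sum>e\<in>W \<inter> supported_in \<gamma>. d \<gamma> e * comm_sign e A)"
        by (rule sum.inter_restrict[OF fW, symmetric])
      also have "W \<inter> supported_in \<gamma> = supported_in \<gamma>" using VW[OF g] by blast
      finally show "(\<Sum>e\<in>supported_in \<gamma>. d \<gamma> e * comm_sign e A)
          = (\<Sum>e\<in>W. if e \<in> supported_in \<gamma> then d \<gamma> e * comm_sign e A else 0)" by simp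
    qed
    also have "\<dots> = (\<Sum>e\<in>W. \<Sum>\<gamma>\<in>\<Gamma>. if e \<in> supported_in \<gamma> then d \<gamma> e * comm_sign e A else 0)"
      by (rule sum.swap)
    also have "\<dots> = (\<Sum>e\<in>W. comm_sign e A * (\<Sum>\<gamma>\<in>\<Gamma>. if e \<in> supported_in \<gamma> then d \<gamma> e else 0))"
      by (rule sum.cong[OF refl]) (simp add: sum_distrib_left if_distrib mult.commute cong: if_cong)
    also have "\<dots> = 0" by (simp add: z)
    finally show ?thesis .
  qed
  show ?thesis
    by (rule total_dist_eq_from_prod[OF fin sup prod_lam_eq[OF fin sup P P' D]])
qed

lemma part2_if:
  assumes M: "pauli_subgroup n \<M>" and fin: "finite \<Gamma>" and sup: "\<forall>\<gamma>\<in>\<Gamma>. \<gamma> \<subseteq> {..<n}"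
    and g0: "\<gamma>0 \<in> \<Gamma>"
    and U: "\<forall>e\<in>errs \<gamma>0. syndrome \<M> e \<noteq> trivial_syndrome \<and>
           (\<forall>(\<gamma>', e')\<in>errs_disj \<Gamma>. (\<gamma>', e') \<noteq> (\<gamma>0, e) \<longrightarrow> syndrome \<M> e' \<noteq> syndrome \<M> e)"
    and P: "admissible \<Gamma> P" and P': "admissible \<Gamma> P'"
    and eq: "\<forall>m\<in>\<M>. synd_exp n \<Gamma> P m = synd_exp n \<Gamma> P' m"
  shows "P \<gamma>0 = P' \<gamma>0"
proof -
  obtain d where d1: "\<And>\<gamma> A. \<gamma> \<in> \<Gamma> \<Longrightarrow> ln (lam P \<gamma> A) - ln (lam P' \<gamma> A) = (\<Sum>e\<in>supported_in \<gamma>. d \<gamma> e * comm_sign e A)"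
    and d2: "\<And>e0. finite (supp e0) \<Longrightarrow>
       (\<Sum>\<gamma>\<in>\<Gamma>. \<Sum>e\<in>supported_in \<gamma>. if syndrome \<M> e = syndrome \<M> e0 then d \<gamma> e else 0) = 0"
    using log_coeffs[OF M fin sup P P' eq] by blast
  have fg: "\<And>\<gamma>. \<gamma> \<in> \<Gamma> \<Longrightarrow> finite \<gamma>" using finite_gamma[OF sup] by blast
  have fg0: "finite \<gamma>0" using fg[OF g0] .
  have dz: "d \<gamma>0 e0 = 0" if e0: "e0 \<in> errs \<gamma>0" for e0
  proof -
    have e0V: "e0 \<in> supported_in \<gamma>0" using e0 by (simp add: errs_def)
    have fe0: "finite (supp e0)" using supp_finite[OF fg0 e0V] .
    have syn: "syndrome \<M> e = syndrome \<M> e0 \<longleftrightarrow> \<gamma> = \<gamma>0 \<and> e = e0"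
      if e: "e \<in> supported_in \<gamma>" and g: "\<gamma> \<in> \<Gamma>" for e \<gamma>
    proof
      assume s: "syndrome \<M> e = syndrome \<M> e0"
      show "\<gamma> = \<gamma>0 \<and> e = e0"
      proof (cases "e = pid")
        case True then show ?thesis using s U e0 by (auto simp: syndrome_pid)
      next
        case False
        then have "(\<gamma>, e) \<in> errs_disj \<Gamma>" using e g by (simp add: errs_disj_def errs_def)
        then show ?thesis using U e0 s by fastforce
      qed
    qed simp
    have "0 = (\<Sum>\<gamma>\<in>\<Gamma>. \<Sum>e\<in>supported_in \<gamma>. if syndrome \<M> e = syndrome \<M> e0 then d \<gamma> e else 0)"
      using d2[OF fe0] by simp
    also have "\<dots> = (\<Sum>\<gamma>\<in>\<Gamma>. if \<gamma> = \<gamma>0 then (\<Sum>e\<in>supported_in \<gamma>. if e = e0 then d \<gamma> e else 0) else 0)"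
      by (intro sum.cong refl) (auto simp: syn)
    also have "\<dots> = (\<Sum>e\<in>supported_in \<gamma>0. if e = e0 then d \<gamma>0 e else 0)"
      using g0 by (simp add: sum.delta' fin)
    also have "\<dots> = d \<gamma>0 e0" using e0V by (simp add: sum.delta' finite_supported_in[OF fg0])
    finally show ?thesis by simp
  qed
  have lnA: "ln (lam P \<gamma>0 A) - ln (lam P' \<gamma>0 A) = d \<gamma>0 pid" for A
  proof -
    have "ln (lam P \<gamma>0 A) - ln (lam P' \<gamma>0 A) = d \<gamma>0 pid * comm_sign pid A + (\<Sum>e\<in>errs \<gamma>0. d \<gamma>0 e * comm_sign e A)"
      using d1[OF g0, of A] by (simp add: sum_V_split[OF fg0])
    then show ?thesis by (simp add: dz)
  qed
  have "d \<gamma>0 pid = 0" using lnA[of pid] by (simp add: lam_pid[OF P g0] lam_pid[OF P' g0])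
  then have lamEq: "lam P \<gamma>0 A = lam P' \<gamma>0 A" for A
    using lnA[of A] lam_pos[OF P g0 fg0, of A] lam_pos[OF P' g0 fg0, of A] by simp
  show ?thesis
  proof (rule fourier_unique[OF fg0])
    show "\<And>x. x \<notin> supported_in \<gamma>0 \<Longrightarrow> P \<gamma>0 x = 0" using adm_out[OF P g0] .
    show "\<And>x. x \<notin> supported_in \<gamma>0 \<Longrightarrow> P' \<gamma>0 x = 0" using adm_out[OF P' g0] .
    show "\<And>A. A \<in> supported_in \<gamma>0 \<Longrightarrow>
       (\<Sum>e\<in>supported_in \<gamma>0. P \<gamma>0 e * comm_sign e A) = (\<Sum>e\<in>supported_in \<gamma>0. P' \<gamma>0 e * comm_sign e A)"
      using lamEq by (simp add: lam_def)
  qed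
qed

lemma distinguish:
  assumes S: "finite S" and e1: "e1 \<in> supported_in S" and e2: "e2 \<in> supported_in S" and ne: "e1 \<noteq> e2"
  shows "\<exists>B\<in>supported_in S. anticomm e1 B \<noteq> anticomm e2 B"
proof -
  let ?y = "pmult e1 e2"
  have y: "?y \<in> supported_in S" using e1 e2 by (rule supported_in_pmult)
  have "?y \<noteq> pid" using ne by (simp add: pmult_eq_pid)
  then obtain i where i: "?y i \<noteq> PI" using exists_nonPI by blast
  then have iS: "i \<in> S" using supported_in_out[OF y] by blast
  let ?B = "single i (if ?y i = PX then PZ else PX)"
  have B: "?B \<in> supported_in S" by (rule single_supported[OF iS])
  have "anticomm ?y ?B" using exists_anticomm_single[of "?y" i] i by simp
  then have "anticomm e1 ?B \<noteq> anticomm e2 ?B"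
    using anticomm_pmult[OF supp_finite[OF S B]] by simp
  then show ?thesis using B by blast
qed

lemma td_neq:
  assumes fin: "finite \<Gamma>" and sup: "\<forall>\<gamma>\<in>\<Gamma>. \<gamma> \<subseteq> {..<n}" and B: "finite (supp B)"
    and ne: "(\<Prod>\<gamma>\<in>\<Gamma>. lam P' \<gamma> B) \<noteq> (\<Prod>\<gamma>\<in>\<Gamma>. lam P \<gamma> B)"
  shows "total_dist \<Gamma> P' \<noteq> total_dist \<Gamma> P"
  using convolution[OF fin sup B, of P'] convolution[OF fin sup B, of P] ne by auto

lemma adm_le1:
  assumes P: "admissible \<Gamma> P" and g: "\<gamma> \<in> \<Gamma>" and fg: "finite \<gamma>"
  shows "P \<gamma> x \<le> 1"
proof (cases "x \<in> supported_in \<gamma>")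
  case True
  have "P \<gamma> x \<le> (\<Sum>e\<in>supported_in \<gamma>. P \<gamma> e)"
    by (rule member_le_sum[OF True]) (auto simp: adm_nonneg[OF P g] finite_supported_in[OF fg])
  then show ?thesis using adm_sum[OF P g] by simp
next
  case False then show ?thesis using adm_out[OF P g] by simp
qed

lemma adm_two_le1:
  assumes P: "admissible \<Gamma> P" and g: "\<gamma> \<in> \<Gamma>" and fg: "finite \<gamma>"
    and x: "x \<in> supported_in \<gamma>" and y: "y \<in> supported_in \<gamma>" and ne: "x \<noteq> y"
  shows "P \<gamma> x + P \<gamma> y \<le> 1"
proof -
  have "(\<Sum>e\<in>{x,y}. P \<gamma> e) \<le> (\<Sum>e\<in>supported_in \<gamma>. P \<gamma> e)"
    by (rule sum_mono2) (use x y in \<open>auto simp: adm_nonneg[OF P g] finite_supported_in[OF fg]\<close>)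
  then show ?thesis using adm_sum[OF P g] ne by simp
qed

lemma adm_pos_V:
  assumes P: "admissible \<Gamma> P" and g: "\<gamma> \<in> \<Gamma>" and x: "x \<in> supported_in \<gamma>"
  shows "P \<gamma> x > 0"
proof (cases "x = pid")
  case True then show ?thesis using adm_pid[OF P g] by simp
next
  case False then show ?thesis using adm_pos[OF P g] x by (simp add: errs_def)
qed

lemma exists_adm:
  assumes fin: "finite \<Gamma>" and sup: "\<forall>\<gamma>\<in>\<Gamma>. \<gamma> \<subseteq> {..<n}"
  shows "\<exists>P. admissible \<Gamma> P"
proof -
  define N where "N \<gamma> = real (card (supported_in \<gamma>))" for \<gamma>
  define P where "P \<gamma> e = (if e \<in> supported_in \<gamma> then (if e = pid then 1 - (N \<gamma> - 1) / (4 * N \<gamma>) else 1 / (4 * N \<gamma>)) else 0)" for \<gamma> e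
  have "admissible \<Gamma> P"
    unfolding admissible_def
  proof (intro ballI conjI allI impI)
    fix \<gamma> assume g: "\<gamma> \<in> \<Gamma>"
    have fg: "finite \<gamma>" using finite_gamma[OF sup g] .
    have N1: "N \<gamma> \<ge> 1" using card_V_pos[OF fg] by (simp add: N_def)
    have q: "(N \<gamma> - 1) / (4 * N \<gamma>) \<le> 1/4" using N1 by (simp add: field_simps)
    have cE: "real (card (errs \<gamma>)) = N \<gamma> - 1"
      using card_V_pos[OF fg] finite_supported_in[OF fg]
      by (simp add: errs_def N_def card_Diff_singleton of_nat_diff)
    fix e
    show "0 \<le> P \<gamma> e" using q N1 by (auto simp: P_def)
    show "e \<notin> supported_in \<gamma> \<Longrightarrow> P \<gamma> e = 0" by (simp add: P_def)
    have pidv: "P \<gamma> pid = 1 - (N \<gamma> - 1) / (4 * N \<gamma>)" by (simp add: P_def)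
    then show "P \<gamma> pid > 1/2" using q by linarith
    show "e \<in> errs \<gamma> \<Longrightarrow> P \<gamma> e > 0" using N1 by (auto simp: P_def errs_def)
    have "(\<Sum>e\<in>supported_in \<gamma>. P \<gamma> e) = P \<gamma> pid + (\<Sum>e\<in>errs \<gamma>. P \<gamma> e)"
      by (rule sum_V_split[OF fg])
    also have "(\<Sum>e\<in>errs \<gamma>. P \<gamma> e) = (\<Sum>e\<in>errs \<gamma>. 1 / (4 * N \<gamma>))"
      by (rule sum.cong) (auto simp: P_def errs_def)
    also have "\<dots> = (N \<gamma> - 1) / (4 * N \<gamma>)" using cE by simp
    finally show "(\<Sum>e\<in>supported_in \<gamma>. P \<gamma> e) = 1" using pidv by linarith
  qed
  then show ?thesis by blast
qed

lemma lam_upd: "lam (P(\<gamma>1 := Q)) \<gamma> A = (if \<gamma> = \<gamma>1 then (\<Sum>x\<in>supported_in \<gamma>. Q x * comm_sign x A) else lam P \<gamma> A)"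
  by (simp add: lam_def)

lemma syn_eq_cs:
  assumes "syndrome \<M> e1 = syndrome \<M> e2" "m \<in> \<M>"
  shows "comm_sign e1 m = comm_sign e2 m"
  using assms by (auto simp: syndrome_eq_iff comm_sign_def)

lemma prod_split1:
  assumes "finite \<Gamma>" "\<gamma>1 \<in> \<Gamma>"
  shows "(\<Prod>\<gamma>\<in>\<Gamma>. f \<gamma>) = f \<gamma>1 * (\<Prod>\<gamma>\<in>\<Gamma> - {\<gamma>1}. f \<gamma>)"
  using prod.remove[OF assms] .

lemma lam_upd_same: "lam (P(\<gamma>1 := Q)) \<gamma>1 A = (\<Sum>x\<in>supported_in \<gamma>1. Q x * comm_sign x A)"
  by (simp add: lam_def)

lemma move_mass:
  assumes M: "pauli_subgroup n \<M>" and fin: "finite \<Gamma>" and sup: "\<forall>\<gamma>\<in>\<Gamma>. \<gamma> \<subseteq> {..<n}"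
    and P: "admissible \<Gamma> P" and g1: "\<gamma>1 \<in> \<Gamma>" and e1: "e1 \<in> errs \<gamma>1"
    and e2: "e2 \<in> supported_in \<gamma>1" and ne: "e1 \<noteq> e2"
    and syn: "syndrome \<M> e1 = syndrome \<M> e2"
  shows "\<exists>P'. admissible \<Gamma> P' \<and> (\<forall>m\<in>\<M>. synd_exp n \<Gamma> P' m = synd_exp n \<Gamma> P m)
           \<and> P' \<gamma>1 \<noteq> P \<gamma>1 \<and> total_dist \<Gamma> P' \<noteq> total_dist \<Gamma> P"
proof -
  have fg1: "finite \<gamma>1" using finite_gamma[OF sup g1] .
  have e1V: "e1 \<in> supported_in \<gamma>1" and e1p: "e1 \<noteq> pid" using e1 by (auto simp: errs_def)
  define u where "u = min (P \<gamma>1 e2) (P \<gamma>1 pid - 1/2) / 2"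
  have pe2: "P \<gamma>1 e2 > 0" using adm_pos_V[OF P g1 e2] .
  have pp: "P \<gamma>1 pid > 1/2" using adm_pid[OF P g1] .
  have u0: "u > 0" using pe2 pp by (simp add: u_def)
  have u1: "u \<le> P \<gamma>1 e2 / 2" "u \<le> (P \<gamma>1 pid - 1/2) / 2" by (auto simp: u_def)
  define Q where "Q x = P \<gamma>1 x + (if x = e1 then u else 0) - (if x = e2 then u else 0)" for x
  define P' where "P' = P(\<gamma>1 := Q)"
  have fV: "finite (supported_in \<gamma>1)" using finite_supported_in[OF fg1] .
  have adm: "admissible \<Gamma> P'"
    unfolding admissible_def
  proof (intro ballI conjI allI impI)
    fix \<gamma> e assume g: "\<gamma> \<in> \<Gamma>"
    show "0 \<le> P' \<gamma> e"
      using adm_nonneg[OF P g, of e] adm_nonneg[OF P g1, of e] u1 pe2 ne u0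
      by (auto simp: P'_def Q_def)
    show "e \<notin> supported_in \<gamma> \<Longrightarrow> P' \<gamma> e = 0"
      using adm_out[OF P g, of e] e1V e2 by (auto simp: P'_def Q_def)
    show "P' \<gamma> pid > 1/2"
      using adm_pid[OF P g] u1 e1p pp by (auto simp: P'_def Q_def)
    show "e \<in> errs \<gamma> \<Longrightarrow> P' \<gamma> e > 0"
      using adm_pos[OF P g, of e] u1 pe2 ne u0 by (auto simp: P'_def Q_def)
    show "(\<Sum>e\<in>supported_in \<gamma>. P' \<gamma> e) = 1"
    proof (cases "\<gamma> = \<gamma>1")
      case True
      have "(\<Sum>e\<in>supported_in \<gamma>1. Q e) = (\<Sum>e\<in>supported_in \<gamma>1. P \<gamma>1 e)
          + (\<Sum>e\<in>supported_in \<gamma>1. if e = e1 then u else 0) - (\<Sum>e\<in>supported_in \<gamma>1. if e = e2 then u else 0)"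
        unfolding Q_def by (simp add: sum.distrib sum_subtractf)
      also have "\<dots> = 1" using adm_sum[OF P g1] e1V e2 fV by (simp add: sum.delta')
      finally show ?thesis using True by (simp add: P'_def)
    next
      case False then show ?thesis using adm_sum[OF P g] by (simp add: P'_def)
    qed
  qed
  have lamQ: "lam P' \<gamma>1 A = lam P \<gamma>1 A + u * comm_sign e1 A - u * comm_sign e2 A" for A
  proof -
    have "lam P' \<gamma>1 A = (\<Sum>x\<in>supported_in \<gamma>1. P \<gamma>1 x * comm_sign x A)
        + (\<Sum>x\<in>supported_in \<gamma>1. if x = e1 then u * comm_sign x A else 0)
        - (\<Sum>x\<in>supported_in \<gamma>1. if x = e2 then u * comm_sign x A else 0)"
    proof -
      have "lam P' \<gamma>1 A = (\<Sum>x\<in>supported_in \<gamma>1. P \<gamma>1 x * comm_sign x A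
          + (if x = e1 then u * comm_sign x A else 0) - (if x = e2 then u * comm_sign x A else 0))"
        unfolding P'_def lam_upd_same by (intro sum.cong) (auto simp: Q_def algebra_simps)
      then show ?thesis by (simp only: sum.distrib sum_subtractf)
    qed
    also have "\<dots> = lam P \<gamma>1 A + u * comm_sign e1 A - u * comm_sign e2 A"
      using e1V e2 fV by (simp add: sum.delta' lam_def)
    finally show ?thesis .
  qed
  have lamO: "lam P' \<gamma> A = lam P \<gamma> A" if "\<gamma> \<noteq> \<gamma>1" for \<gamma> A
    using that by (simp add: P'_def lam_upd)
  have prodP': "(\<Prod>\<gamma>\<in>\<Gamma>. lam P' \<gamma> A) = lam P' \<gamma>1 A * (\<Prod>\<gamma>\<in>\<Gamma> - {\<gamma>1}. lam P \<gamma> A)" for A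
    using prod_split1[OF fin g1, of "\<lambda>\<gamma>. lam P' \<gamma> A"] lamO by simp
  have prodP: "(\<Prod>\<gamma>\<in>\<Gamma>. lam P \<gamma> A) = lam P \<gamma>1 A * (\<Prod>\<gamma>\<in>\<Gamma> - {\<gamma>1}. lam P \<gamma> A)" for A
    using prod_split1[OF fin g1] .
  have syneq: "\<forall>m\<in>\<M>. synd_exp n \<Gamma> P' m = synd_exp n \<Gamma> P m"
  proof
    fix m assume m: "m \<in> \<M>"
    have fm: "finite (supp m)" using subgroup_supp[OF M m] .
    have "lam P' \<gamma>1 m = lam P \<gamma>1 m" using lamQ syn_eq_cs[OF syn m] by simp
    then show "synd_exp n \<Gamma> P' m = synd_exp n \<Gamma> P m"
      by (simp add: synd_exp_prod[OF fin sup fm] prodP' prodP)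
  qed
  have neq1: "P' \<gamma>1 \<noteq> P \<gamma>1"
  proof
    assume "P' \<gamma>1 = P \<gamma>1"
    then have "Q e1 = P \<gamma>1 e1" by (simp add: P'_def)
    then show False using ne u0 by (simp add: Q_def)
  qed
  obtain B where B: "B \<in> supported_in \<gamma>1" and Bd: "anticomm e1 B \<noteq> anticomm e2 B"
    using distinguish[OF fg1 e1V e2 ne] by blast
  have fB: "finite (supp B)" using supp_finite[OF fg1 B] .
  have "lam P' \<gamma>1 B \<noteq> lam P \<gamma>1 B" using lamQ[of B] Bd u0 by (auto simp: comm_sign_def)
  moreover have "(\<Prod>\<gamma>\<in>\<Gamma> - {\<gamma>1}. lam P \<gamma> B) > 0"
    by (rule prod_pos) (auto intro: lam_pos[OF P] finite_gamma[OF sup])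
  ultimately have "(\<Prod>\<gamma>\<in>\<Gamma>. lam P' \<gamma> B) \<noteq> (\<Prod>\<gamma>\<in>\<Gamma>. lam P \<gamma> B)"
    by (simp add: prodP' prodP)
  then have "total_dist \<Gamma> P' \<noteq> total_dist \<Gamma> P" by (rule td_neq[OF fin sup fB])
  then show ?thesis using adm syneq neq1 by blast
qed

definition mix :: "npauli \<Rightarrow> real \<Rightarrow> real \<Rightarrow> (npauli \<Rightarrow> real) \<Rightarrow> npauli \<Rightarrow> real" where
  "mix e a b Q = (\<lambda>x. a * Q x + b * Q (pmult e x))"

lemma pmult_out:
  assumes "e \<in> supported_in S" "x \<notin> supported_in S"
  shows "pmult e x \<notin> supported_in S"
proof
  assume "pmult e x \<in> supported_in S"
  then have "pmult e (pmult e x) \<in> supported_in S" using assms(1) supported_in_pmult by blast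
  then show False using assms(2) by simp
qed

lemma mix_out:
  assumes "e \<in> supported_in S" "\<And>y. y \<notin> supported_in S \<Longrightarrow> Q y = 0" "x \<notin> supported_in S"
  shows "mix e a b Q x = 0"
  using assms pmult_out[OF assms(1,3)] by (simp add: mix_def)

lemma sum_reindex_e:
  assumes "e \<in> supported_in S"
  shows "(\<Sum>x\<in>supported_in S. g (pmult e x)) = (\<Sum>x\<in>supported_in S. g x)"
  by (rule sum.reindex_bij_witness[where i="pmult e" and j="pmult e"])
    (auto intro: supported_in_pmult[OF assms])

lemma mix_sum:
  assumes "e \<in> supported_in S"
  shows "(\<Sum>x\<in>supported_in S. mix e a b Q x) = (a + b) * (\<Sum>x\<in>supported_in S. Q x)"
proof -
  have "(\<Sum>x\<in>supported_in S. mix e a b Q x)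
      = a * (\<Sum>x\<in>supported_in S. Q x) + b * (\<Sum>x\<in>supported_in S. Q (pmult e x))"
    by (simp add: mix_def sum.distrib sum_distrib_left)
  also have "(\<Sum>x\<in>supported_in S. Q (pmult e x)) = (\<Sum>x\<in>supported_in S. Q x)"
    by (rule sum_reindex_e[OF assms])
  finally show ?thesis by (simp add: algebra_simps)
qed

lemma mix_lam:
  assumes e: "e \<in> supported_in S" and A: "finite (supp A)"
  shows "(\<Sum>x\<in>supported_in S. mix e a b Q x * comm_sign x A)
       = (a + b * comm_sign e A) * (\<Sum>x\<in>supported_in S. Q x * comm_sign x A)"
proof -
  have "(\<Sum>x\<in>supported_in S. mix e a b Q x * comm_sign x A)
      = a * (\<Sum>x\<in>supported_in S. Q x * comm_sign x A) + b * (\<Sum>x\<in>supported_in S. Q (pmult e x) * comm_sign x A)"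
    by (simp add: mix_def sum.distrib sum_distrib_left algebra_simps)
  also have "(\<Sum>x\<in>supported_in S. Q (pmult e x) * comm_sign x A)
      = (\<Sum>x\<in>supported_in S. Q (pmult e (pmult e x)) * comm_sign (pmult e x) A)"
    using sum_reindex_e[OF e, of "\<lambda>x. Q (pmult e x) * comm_sign x A"] by simp
  also have "\<dots> = comm_sign e A * (\<Sum>x\<in>supported_in S. Q x * comm_sign x A)"
    by (simp add: comm_sign_pmult[OF A] sum_distrib_left algebra_simps)
  finally show ?thesis by (simp add: algebra_simps)
qed

lemma prod_split2:
  assumes "finite \<Gamma>" "\<gamma>1 \<in> \<Gamma>" "\<gamma>2 \<in> \<Gamma>" "\<gamma>1 \<noteq> \<gamma>2"
  shows "(\<Prod>\<gamma>\<in>\<Gamma>. f \<gamma>) = f \<gamma>1 * f \<gamma>2 * (\<Prod>\<gamma>\<in>\<Gamma> - {\<gamma>1} - {\<gamma>2}. f \<gamma>)"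
proof -
  have "(\<Prod>\<gamma>\<in>\<Gamma>. f \<gamma>) = f \<gamma>1 * (\<Prod>\<gamma>\<in>\<Gamma> - {\<gamma>1}. f \<gamma>)" using prod.remove[OF assms(1,2)] .
  also have "(\<Prod>\<gamma>\<in>\<Gamma> - {\<gamma>1}. f \<gamma>) = f \<gamma>2 * (\<Prod>\<gamma>\<in>\<Gamma> - {\<gamma>1} - {\<gamma>2}. f \<gamma>)"
    using assms by (intro prod.remove) auto
  finally show ?thesis by (simp add: mult.assoc)
qed

lemma factor_one:
  assumes u: "0 < u" "u < 1/2"
  shows "((1 - u) + u * comm_sign e1 A) * ((1 - u) / (1 - 2*u) + (- u / (1 - 2*u)) * comm_sign e2 A) = 1
         \<longleftrightarrow> comm_sign e1 A = comm_sign e2 A"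
proof -
  have c: "1 - 2*u > 0" using u by simp
  have c1: "1 - 2*u \<noteq> 1" using u by simp
  have c0: "1 - 2*u \<noteq> 0" using c by simp
  have f2a: "(1 - u) / (1 - 2*u) + (- u / (1 - 2*u)) * 1 = 1"
  proof -
    have "(1 - u) / (1 - 2*u) + (- u / (1 - 2*u)) * 1 = ((1 - u) + (- u)) / (1 - 2*u)"
      unfolding mult_1_right by (rule add_divide_distrib[symmetric])
    also have "\<dots> = (1 - 2*u) / (1 - 2*u)"
      by (rule arg_cong[where f="\<lambda>t. t / (1 - 2*u)"]) simp
    also have "\<dots> = 1" using c0 by simp
    finally show ?thesis .
  qed
  have f2b: "(1 - u) / (1 - 2*u) + (- u / (1 - 2*u)) * (-1) = 1 / (1 - 2*u)"
  proof -
    have "(1 - u) / (1 - 2*u) + (- u / (1 - 2*u)) * (-1) = ((1 - u) + u) / (1 - 2*u)"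
      unfolding mult_minus1_right minus_divide_left[symmetric] minus_minus by (rule add_divide_distrib[symmetric])
    also have "(1 - u) + u = 1" by simp
    finally show ?thesis .
  qed
  have f1a: "(1 - u) + u * 1 = 1" by simp
  have f1b: "(1 - u) + u * (-1) = 1 - 2*u" by simp
  have n1: "1 * (1 / (1 - 2*u)) \<noteq> 1" using c c1 by (simp add: field_simps)
  have n2: "(1 - 2*u) * 1 \<noteq> 1" using c1 by simp
  have y2: "(1 - 2*u) * (1 / (1 - 2*u)) = 1" using c by simp
  show ?thesis
  proof (cases "anticomm e1 A"; cases "anticomm e2 A")
    assume "anticomm e1 A" "anticomm e2 A" then show ?thesis
      unfolding comm_sign_def using f1b f2b y2 by simp
  next
    assume "anticomm e1 A" "\<not> anticomm e2 A" then show ?thesis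
      unfolding comm_sign_def using f1b f2a n2 by simp
  next
    assume "\<not> anticomm e1 A" "anticomm e2 A" then show ?thesis
      unfolding comm_sign_def using f1a f2b n1 by simp
  next
    assume "\<not> anticomm e1 A" "\<not> anticomm e2 A" then show ?thesis
      unfolding comm_sign_def using f1a f2a by simp
  qed
qed

lemma flip_deflip:
  assumes M: "pauli_subgroup n \<M>" and fin: "finite \<Gamma>" and sup: "\<forall>\<gamma>\<in>\<Gamma>. \<gamma> \<subseteq> {..<n}"
    and P: "admissible \<Gamma> P" and g1: "\<gamma>1 \<in> \<Gamma>" and g2: "\<gamma>2 \<in> \<Gamma>" and gne: "\<gamma>1 \<noteq> \<gamma>2"
    and e1: "e1 \<in> errs \<gamma>1" and e2: "e2 \<in> errs \<gamma>2"
    and syn: "syndrome \<M> e1 = syndrome \<M> e2"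
  shows "\<exists>P'. admissible \<Gamma> P' \<and> (\<forall>m\<in>\<M>. synd_exp n \<Gamma> P' m = synd_exp n \<Gamma> P m)
           \<and> P' \<gamma>1 \<noteq> P \<gamma>1 \<and> (e1 \<noteq> e2 \<longrightarrow> total_dist \<Gamma> P' \<noteq> total_dist \<Gamma> P)"
proof -
  have fg1: "finite \<gamma>1" using finite_gamma[OF sup g1] .
  have fg2: "finite \<gamma>2" using finite_gamma[OF sup g2] .
  have e1V: "e1 \<in> supported_in \<gamma>1" and e1p: "e1 \<noteq> pid" using e1 by (auto simp: errs_def)
  have e2V: "e2 \<in> supported_in \<gamma>2" and e2p: "e2 \<noteq> pid" using e2 by (auto simp: errs_def)
  have fV2: "finite (supported_in \<gamma>2)" using finite_supported_in[OF fg2] .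
  define m2 where "m2 = Min (P \<gamma>2 ` supported_in \<gamma>2)"
  have m2pos: "m2 > 0"
    unfolding m2_def using fV2 adm_pos_V[OF P g2] pid_supported[of \<gamma>2]
    by (subst Min_gr_iff) (auto simp del: pid_supported)
  have m2le: "m2 \<le> P \<gamma>2 x" if "x \<in> supported_in \<gamma>2" for x
    unfolding m2_def using fV2 that by (intro Min_le) auto
  define p1 where "p1 = P \<gamma>1 pid"
  have p1: "p1 > 1/2" "p1 \<le> 1" using adm_pid[OF P g1] adm_le1[OF P g1 fg1] by (auto simp: p1_def)
  define u where "u = min (1/4) (min (m2/4) ((p1 - 1/2)/2))"
  have u0: "u > 0" using m2pos p1 by (simp add: u_def)
  have u1: "u \<le> 1/4" "u \<le> m2/4" "u \<le> (p1 - 1/2)/2" unfolding u_def by linarith+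
  define c where "c = 1 - 2*u"
  have c: "c > 0" "c \<ge> 1/2" using u1 by (auto simp: c_def)
  define Q1 where "Q1 = mix e1 (1 - u) u (P \<gamma>1)"
  define Q2 where "Q2 = mix e2 ((1 - u) / c) (- u / c) (P \<gamma>2)"
  define P' where "P' = P(\<gamma>1 := Q1, \<gamma>2 := Q2)"
  have P'1: "P' \<gamma>1 = Q1" using gne by (simp add: P'_def)
  have P'2: "P' \<gamma>2 = Q2" by (simp add: P'_def)
  have P'o: "P' \<gamma> = P \<gamma>" if "\<gamma> \<noteq> \<gamma>1" "\<gamma> \<noteq> \<gamma>2" for \<gamma> using that by (simp add: P'_def)
  have Q2v: "Q2 x = ((1 - u) * P \<gamma>2 x - u * P \<gamma>2 (pmult e2 x)) / c" for x
    unfolding Q2_def mix_def using c by (simp add: field_simps)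
  have Q2pos: "Q2 x > 0" if x: "x \<in> supported_in \<gamma>2" for x
  proof -
    have a: "P \<gamma>2 x \<ge> m2" using m2le[OF x] .
    have b: "P \<gamma>2 (pmult e2 x) \<le> 1" using adm_le1[OF P g2 fg2] .
    have "(1 - u) * P \<gamma>2 x \<ge> (3/4) * P \<gamma>2 x"
      using u1 adm_nonneg[OF P g2, of x] by (intro mult_right_mono) auto
    moreover have "u * P \<gamma>2 (pmult e2 x) \<le> u"
      using b u0 by (simp add: mult_left_le)
    ultimately have "(1 - u) * P \<gamma>2 x - u * P \<gamma>2 (pmult e2 x) > 0"
      using a u1 m2pos by linarith
    then show ?thesis using c by (simp add: Q2v)
  qed
  have adm: "admissible \<Gamma> P'"
    unfolding admissible_def
  proof (intro ballI conjI allI impI)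
    fix \<gamma> e assume g: "\<gamma> \<in> \<Gamma>"
    consider "\<gamma> = \<gamma>1" | "\<gamma> = \<gamma>2" | "\<gamma> \<noteq> \<gamma>1" "\<gamma> \<noteq> \<gamma>2" by blast
    note cases = this
    show "0 \<le> P' \<gamma> e"
    proof (cases rule: cases)
      case 1
      have "0 \<le> (1 - u) * P \<gamma>1 e" using u1 adm_nonneg[OF P g1, of e] by simp
      moreover have "0 \<le> u * P \<gamma>1 (pmult e1 e)" using u0 adm_nonneg[OF P g1] by simp
      ultimately show ?thesis using P'1 1 by (simp add: Q1_def mix_def)
    next
      case 2
      show ?thesis
      proof (cases "e \<in> supported_in \<gamma>2")
        case True then show ?thesis using Q2pos P'2 2 by (simp add: less_imp_le)
      next
        case False then show ?thesis using P'2 2 mix_out[OF e2V adm_out[OF P g2]] by (simp add: Q2_def)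
      qed
    next
      case 3 then show ?thesis using P'o adm_nonneg[OF P g] by simp
    qed
    show "e \<notin> supported_in \<gamma> \<Longrightarrow> P' \<gamma> e = 0"
    proof (cases rule: cases)
      case 1 then show "e \<notin> supported_in \<gamma> \<Longrightarrow> P' \<gamma> e = 0"
        using P'1 mix_out[OF e1V adm_out[OF P g1]] by (simp add: Q1_def)
    next
      case 2 then show "e \<notin> supported_in \<gamma> \<Longrightarrow> P' \<gamma> e = 0"
        using P'2 mix_out[OF e2V adm_out[OF P g2]] by (simp add: Q2_def)
    next
      case 3 then show "e \<notin> supported_in \<gamma> \<Longrightarrow> P' \<gamma> e = 0"
        using P'o adm_out[OF P g] by simp
    qed
    show "e \<in> errs \<gamma> \<Longrightarrow> P' \<gamma> e > 0"
    proof (cases rule: cases)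
      case 1
      assume e: "e \<in> errs \<gamma>"
      have "P \<gamma>1 e > 0" using adm_pos[OF P g1] e 1 by simp
      moreover have "P \<gamma>1 (pmult e1 e) \<ge> 0" using adm_nonneg[OF P g1] .
      ultimately show ?thesis using P'1 1 u1 u0
        by (simp add: Q1_def mix_def add_pos_nonneg)
    next
      case 2
      assume e: "e \<in> errs \<gamma>"
      then show ?thesis using P'2 2 Q2pos by (simp add: errs_def)
    next
      case 3 then show "e \<in> errs \<gamma> \<Longrightarrow> P' \<gamma> e > 0" using P'o adm_pos[OF P g] by simp
    qed
    show "P' \<gamma> pid > 1/2"
    proof (cases rule: cases)
      case 1
      have q: "P \<gamma>1 e1 \<ge> 0" using adm_nonneg[OF P g1] .
      have "u * p1 \<le> u" using p1 u0 by (simp add: mult_left_le)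
      then have "(1 - u) * p1 > 1/2" using u1 p1 by (simp add: algebra_simps)
      moreover have "Q1 pid = (1 - u) * p1 + u * P \<gamma>1 e1" by (simp add: Q1_def mix_def p1_def)
      ultimately show ?thesis using P'1 1 q u0 by (simp add: add_pos_nonneg) (smt (verit) mult_nonneg_nonneg)
    next
      case 2
      define p where "p = P \<gamma>2 pid"
      define q where "q = P \<gamma>2 e2"
      have pq: "p + q \<le> 1" unfolding p_def q_def
        using adm_two_le1[OF P g2 fg2 pid_supported e2V] e2p by metis
      have pp: "p > 1/2" using adm_pid[OF P g2] by (simp add: p_def)
      have "u * (p + q - 1) \<le> 0" using pq u0 by (simp add: mult_nonneg_nonpos)
      moreover have "(1 - u) * p - u * q - c / 2 = (p - 1/2) - u * (p + q - 1)"
        unfolding c_def by (simp add: field_simps)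
      ultimately have "(1 - u) * p - u * q > c / 2" using pp by linarith
      then have "((1 - u) * p - u * q) / c > 1/2" using c by (simp add: field_simps)
      then show ?thesis using P'2 2 by (simp add: Q2v p_def q_def)
    next
      case 3 then show ?thesis using P'o adm_pid[OF P g] by simp
    qed
    show "(\<Sum>e\<in>supported_in \<gamma>. P' \<gamma> e) = 1"
    proof (cases rule: cases)
      case 1 then show ?thesis using P'1 mix_sum[OF e1V] adm_sum[OF P g1] by (simp add: Q1_def)
    next
      case 2
      have "(1 - u) / c + - u / c = 1"
      proof -
        have "(1 - u) / c + - u / c = ((1 - u) + - u) / c" by (rule add_divide_distrib[symmetric])
        also have "\<dots> = c / c" by (rule arg_cong[where f="\<lambda>t. t / c"]) (simp add: c_def)
        also have "\<dots> = 1" using c by simp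
        finally show ?thesis .
      qed
      then show ?thesis using 2 P'2 mix_sum[OF e2V] adm_sum[OF P g2] by (simp add: Q2_def)
    next
      case 3 then show ?thesis using P'o adm_sum[OF P g] by simp
    qed
  qed
  define f1 where "f1 A = (1 - u) + u * comm_sign e1 A" for A
  define f2 where "f2 A = (1 - u) / c + (- u / c) * comm_sign e2 A" for A
  have prodP': "(\<Prod>\<gamma>\<in>\<Gamma>. lam P' \<gamma> A) = f1 A * f2 A * (\<Prod>\<gamma>\<in>\<Gamma>. lam P \<gamma> A)"
    if A: "finite (supp A)" for A
  proof -
    have l1: "lam P' \<gamma>1 A = f1 A * lam P \<gamma>1 A"
      unfolding lam_def P'1 Q1_def f1_def by (rule mix_lam[OF e1V A])
    have l2: "lam P' \<gamma>2 A = f2 A * lam P \<gamma>2 A"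
      unfolding lam_def P'2 Q2_def f2_def by (rule mix_lam[OF e2V A])
    have lo: "(\<Prod>\<gamma>\<in>\<Gamma> - {\<gamma>1} - {\<gamma>2}. lam P' \<gamma> A) = (\<Prod>\<gamma>\<in>\<Gamma> - {\<gamma>1} - {\<gamma>2}. lam P \<gamma> A)"
      by (rule prod.cong) (auto simp: lam_def P'o)
    show ?thesis
      unfolding prod_split2[OF fin g1 g2 gne, of "\<lambda>\<gamma>. lam P' \<gamma> A"] prod_split2[OF fin g1 g2 gne, of "\<lambda>\<gamma>. lam P \<gamma> A"]
      using l1 l2 lo by (simp add: algebra_simps)
  qed
  have u2: "u < 1/2" using u1 by simp
  have fone: "f1 A * f2 A = 1 \<longleftrightarrow> comm_sign e1 A = comm_sign e2 A" for A
    unfolding f1_def f2_def c_def using factor_one[OF u0 u2] by simp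
  have syneq: "\<forall>m\<in>\<M>. synd_exp n \<Gamma> P' m = synd_exp n \<Gamma> P m"
  proof
    fix m assume m: "m \<in> \<M>"
    have fm: "finite (supp m)" using subgroup_supp[OF M m] .
    have "f1 m * f2 m = 1" using fone syn_eq_cs[OF syn m] by simp
    then show "synd_exp n \<Gamma> P' m = synd_exp n \<Gamma> P m"
      by (simp add: synd_exp_prod[OF fin sup fm] prodP'[OF fm])
  qed
  have neq1: "P' \<gamma>1 \<noteq> P \<gamma>1"
  proof
    assume "P' \<gamma>1 = P \<gamma>1"
    then have eq: "Q1 pid = p1" using P'1 by (simp add: p1_def)
    have "p1 + P \<gamma>1 e1 \<le> 1" unfolding p1_def
      using adm_two_le1[OF P g1 fg1 pid_supported e1V] e1p by metis
    then have "P \<gamma>1 e1 < p1" using p1 by simp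
    moreover have "Q1 pid = p1 - u * (p1 - P \<gamma>1 e1)" by (simp add: Q1_def mix_def p1_def algebra_simps)
    ultimately show False using eq u0 by simp
  qed
  have tdneq: "total_dist \<Gamma> P' \<noteq> total_dist \<Gamma> P" if ne: "e1 \<noteq> e2"
  proof -
    have sub: "supported_in \<gamma> \<subseteq> supported_in {..<n}" if "\<gamma> \<in> \<Gamma>" for \<gamma>
      using sup that by (intro supported_in_mono) auto
    obtain B where B: "B \<in> supported_in {..<n}" and Bd: "anticomm e1 B \<noteq> anticomm e2 B"
      using distinguish[of "{..<n}" e1 e2] sub[OF g1] sub[OF g2] e1V e2V ne by auto
    have fB: "finite (supp B)" using supp_finite[OF _ B] by simp
    have "f1 B * f2 B \<noteq> 1" using fone Bd by (auto simp: comm_sign_def)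
    moreover have "(\<Prod>\<gamma>\<in>\<Gamma>. lam P \<gamma> B) > 0"
      by (rule prod_pos) (auto intro: lam_pos[OF P] finite_gamma[OF sup])
    ultimately have "(\<Prod>\<gamma>\<in>\<Gamma>. lam P' \<gamma> B) \<noteq> (\<Prod>\<gamma>\<in>\<Gamma>. lam P \<gamma> B)"
      by (simp add: prodP'[OF fB])
    then show ?thesis by (rule td_neq[OF fin sup fB])
  qed
  show ?thesis using adm syneq neq1 tdneq by blast
qed

lemma restr_inv_zero:
  assumes M: "pauli_subgroup n \<M>" and fg: "finite \<gamma>" and fe0: "finite (supp e0)"
    and f: "\<And>A. f A = f (restr \<gamma> A)"
    and nos: "\<forall>e\<in>supported_in \<gamma>. syndrome \<M> e \<noteq> syndrome \<M> e0"
  shows "(\<Sum>m\<in>\<M>. comm_sign e0 m * f m) = 0"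
proof -
  let ?V = "supported_in \<gamma>"
  define c where "c e = (\<Sum>B\<in>?V. f B * comm_sign e B) / real (card ?V)" for e
  have fx: "f A = (\<Sum>e\<in>?V. c e * comm_sign e A)" for A
    unfolding c_def by (rule fourier_expand[OF fg]) (rule f)
  have "(\<Sum>m\<in>\<M>. comm_sign e0 m * f m) = (\<Sum>m\<in>\<M>. \<Sum>e\<in>?V. c e * (comm_sign e m * comm_sign e0 m))"
    by (simp add: fx sum_distrib_left algebra_simps)
  also have "\<dots> = (\<Sum>e\<in>?V. \<Sum>m\<in>\<M>. c e * (comm_sign e m * comm_sign e0 m))"
    by (rule sum.swap)
  also have "\<dots> = (\<Sum>e\<in>?V. c e * (\<Sum>m\<in>\<M>. comm_sign e m * comm_sign e0 m))"
    by (simp add: sum_distrib_left)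
  also have "\<dots> = 0"
  proof (rule sum.neutral, intro ballI)
    fix e assume e: "e \<in> ?V"
    have fe: "finite (supp e)" using supp_finite[OF fg e] .
    show "c e * (\<Sum>m\<in>\<M>. comm_sign e m * comm_sign e0 m) = 0"
      using nos e by (simp add: syn_ortho[OF M fe fe0])
  qed
  finally show ?thesis .
qed

lemma linear_part:
  assumes M: "pauli_subgroup n \<M>" and fg: "finite \<gamma>" and fe0: "finite (supp e0)"
    and nt: "syndrome \<M> e0 \<noteq> trivial_syndrome"
  shows "(\<Sum>m\<in>\<M>. comm_sign e0 m * (lam P \<gamma> m - 1))
       = real (card \<M>) * (\<Sum>x\<in>{x\<in>errs \<gamma>. syndrome \<M> x = syndrome \<M> e0}. P \<gamma> x)"
proof -
  let ?V = "supported_in \<gamma>"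
  have fV: "finite ?V" using finite_supported_in[OF fg] .
  have fpid: "finite (supp pid)" by (simp add: supp_def)
  have "(\<Sum>m\<in>\<M>. comm_sign pid m * comm_sign e0 m) = (if syndrome \<M> pid = syndrome \<M> e0 then real (card \<M>) else 0)"
    by (rule syn_ortho[OF M fpid fe0])
  then have s0: "(\<Sum>m\<in>\<M>. comm_sign e0 m) = 0"
    using nt by (simp only: syndrome_pid comm_sign_pid mult_1_left) simp
  have "(\<Sum>m\<in>\<M>. comm_sign e0 m * lam P \<gamma> m)
      = (\<Sum>m\<in>\<M>. \<Sum>x\<in>?V. P \<gamma> x * (comm_sign x m * comm_sign e0 m))"
    by (simp add: lam_def sum_distrib_left algebra_simps)
  also have "\<dots> = (\<Sum>x\<in>?V. \<Sum>m\<in>\<M>. P \<gamma> x * (comm_sign x m * comm_sign e0 m))"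
    by (rule sum.swap)
  also have "\<dots> = (\<Sum>x\<in>?V. P \<gamma> x * (\<Sum>m\<in>\<M>. comm_sign x m * comm_sign e0 m))"
    by (simp add: sum_distrib_left)
  also have "\<dots> = (\<Sum>x\<in>?V. if syndrome \<M> x = syndrome \<M> e0 then real (card \<M>) * P \<gamma> x else 0)"
  proof (rule sum.cong[OF refl])
    fix x assume x: "x \<in> ?V"
    have fx: "finite (supp x)" using supp_finite[OF fg x] .
    show "P \<gamma> x * (\<Sum>m\<in>\<M>. comm_sign x m * comm_sign e0 m)
        = (if syndrome \<M> x = syndrome \<M> e0 then real (card \<M>) * P \<gamma> x else 0)"
      by (simp add: syn_ortho[OF M fx fe0])
  qed
  also have "\<dots> = (\<Sum>x\<in>{x\<in>?V. syndrome \<M> x = syndrome \<M> e0}. real (card \<M>) * P \<gamma> x)"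
    by (simp add: sum.inter_filter[OF fV])
  also have "{x\<in>?V. syndrome \<M> x = syndrome \<M> e0} = {x\<in>errs \<gamma>. syndrome \<M> x = syndrome \<M> e0}"
    using nt by (auto simp: errs_def syndrome_pid)
  finally have "(\<Sum>m\<in>\<M>. comm_sign e0 m * lam P \<gamma> m)
      = real (card \<M>) * (\<Sum>x\<in>{x\<in>errs \<gamma>. syndrome \<M> x = syndrome \<M> e0}. P \<gamma> x)"
    by (simp add: sum_distrib_left)
  then show ?thesis using s0 by (simp add: right_diff_distrib sum_subtractf)
qed

lemma ln_quad:
  fixes y :: real
  assumes "0 \<le> y" "y \<le> 1/2"
  shows "\<bar>ln (1 - y) + y\<bar> \<le> 2 * y^2"
proof -
  have a: "- y - 2 * y^2 \<le> ln (1 - y)" by (rule ln_one_minus_pos_lower_bound[OF assms])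
  have b: "ln (1 - y) \<le> (1 - y) - 1" using assms by (intro ln_le_minus_one) simp
  show ?thesis using a b by (simp add: abs_le_iff)
qed

lemma gamma_bound:
  assumes M: "pauli_subgroup n \<M>" and P: "admissible \<Gamma> P" and g: "\<gamma> \<in> \<Gamma>" and fg: "finite \<gamma>"
    and fe0: "finite (supp e0)" and nt: "syndrome \<M> e0 \<noteq> trivial_syndrome"
    and small: "(\<Sum>x\<in>errs \<gamma>. P \<gamma> x) \<le> 1/4"
  shows "\<bar>(\<Sum>m\<in>\<M>. comm_sign e0 m * ln (lam P \<gamma> m)) / real (card \<M>)
           - (\<Sum>x\<in>{x\<in>errs \<gamma>. syndrome \<M> x = syndrome \<M> e0}. P \<gamma> x)\<bar>
         \<le> 8 * real (card (errs \<gamma>)) * (\<Sum>x\<in>errs \<gamma>. (P \<gamma> x)^2)"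
proof -
  let ?s = "\<Sum>x\<in>errs \<gamma>. P \<gamma> x"
  let ?S = "\<Sum>x\<in>errs \<gamma>. (P \<gamma> x)^2"
  let ?c = "real (card (errs \<gamma>))"
  let ?N = "real (card \<M>)"
  have N: "?N > 0"
    using M subgroup_finite[OF M] unfolding pauli_subgroup_def by (metis card_gt_0_iff empty_iff of_nat_0_less_iff)
  define r where "r m = ln (lam P \<gamma> m) - (lam P \<gamma> m - 1)" for m
  have s_nonneg: "?s \<ge> 0" by (rule sum_nonneg) (simp add: adm_nonneg[OF P g])
  have sq: "?s^2 \<le> ?S * ?c" by (rule sum_squared_le_sum_of_squares)
  have pid_eq: "P \<gamma> pid = 1 - ?s" using adm_errs_sum[OF P g fg] by simp
  have rb: "\<bar>r m\<bar> \<le> 8 * ?c * ?S" for m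
  proof -
    define y where "y = 1 - lam P \<gamma> m"
    have y0: "y \<ge> 0" using lam_le1[OF P g] by (simp add: y_def)
    have y1: "y \<le> 2 * ?s" using lam_lower[OF P g fg, of m] pid_eq by (simp add: y_def)
    have y2: "y \<le> 1/2" using y1 small by simp
    have "\<bar>r m\<bar> = \<bar>ln (1 - y) + y\<bar>" by (simp add: r_def y_def)
    also have "\<dots> \<le> 2 * y^2" by (rule ln_quad[OF y0 y2])
    also have "y^2 \<le> (2 * ?s)^2" using y0 y1 by (intro power_mono) auto
    then have "2 * y^2 \<le> 8 * ?s^2" by (simp add: power_mult_distrib)
    also have "\<dots> \<le> 8 * (?S * ?c)" using sq by simp
    finally show ?thesis by (simp add: algebra_simps)
  qed
  have lin: "(\<Sum>m\<in>\<M>. comm_sign e0 m * (lam P \<gamma> m - 1)) / ?N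
       = (\<Sum>x\<in>{x\<in>errs \<gamma>. syndrome \<M> x = syndrome \<M> e0}. P \<gamma> x)"
    using linear_part[OF M fg fe0 nt, of P] N by simp
  have "(\<Sum>m\<in>\<M>. comm_sign e0 m * ln (lam P \<gamma> m)) / ?N
           - (\<Sum>x\<in>{x\<in>errs \<gamma>. syndrome \<M> x = syndrome \<M> e0}. P \<gamma> x)
       = (\<Sum>m\<in>\<M>. comm_sign e0 m * r m) / ?N"
    unfolding lin[symmetric] r_def
    by (simp add: diff_divide_distrib[symmetric] sum_subtractf[symmetric] right_diff_distrib)
  also have "\<bar>\<dots>\<bar> \<le> (\<Sum>m\<in>\<M>. 8 * ?c * ?S) / ?N"
  proof -
    have "\<bar>\<Sum>m\<in>\<M>. comm_sign e0 m * r m\<bar> \<le> (\<Sum>m\<in>\<M>. \<bar>comm_sign e0 m * r m\<bar>)"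
      by (rule sum_abs)
    also have "\<dots> \<le> (\<Sum>m\<in>\<M>. 8 * ?c * ?S)"
      by (rule sum_mono) (simp add: abs_mult comm_sign_abs rb)
    finally have X: "\<bar>\<Sum>m\<in>\<M>. comm_sign e0 m * r m\<bar> \<le> ?N * (8 * ?c * ?S)" by simp
    have "\<bar>(\<Sum>m\<in>\<M>. comm_sign e0 m * r m) / ?N\<bar> = \<bar>\<Sum>m\<in>\<M>. comm_sign e0 m * r m\<bar> / ?N"
      using N by (simp add: abs_divide)
    also have "\<dots> \<le> (?N * (8 * ?c * ?S)) / ?N" using X N by (intro divide_right_mono) auto
    finally show ?thesis by simp
  qed
  also have "\<dots> = 8 * ?c * ?S" using N by simp
  finally show ?thesis .
qed

lemma part3:
  assumes M: "pauli_subgroup n \<M>" and fin: "finite \<Gamma>" and sup: "\<forall>\<gamma>\<in>\<Gamma>. \<gamma> \<subseteq> {..<n}"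
    and g0: "\<gamma>0 \<in> \<Gamma>" and e0: "e0 \<in> errs \<gamma>0" and nt: "syndrome \<M> e0 \<noteq> trivial_syndrome"
  shows "\<exists>Q :: (nat set \<Rightarrow> npauli \<Rightarrow> real) \<Rightarrow> real. learnable n \<Gamma> \<M> Q \<and>
            (\<exists>K \<delta>. \<delta> > 0 \<and> (\<forall>P. admissible \<Gamma> P \<longrightarrow>
               rate_norm_sq (class_supports (synd_class \<Gamma> \<M> e0)) P \<le> \<delta>\<^sup>2 \<longrightarrow>
               \<bar>Q P - class_rate (synd_class \<Gamma> \<M> e0) P\<bar> \<le> K * rate_norm_sq (class_supports (synd_class \<Gamma> \<M> e0)) P))"
proof -
  let ?C = "synd_class \<Gamma> \<M> e0"
  let ?s0 = "syndrome \<M> e0"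
  let ?N = "real (card \<M>)"
  have fg: "\<And>\<gamma>. \<gamma> \<in> \<Gamma> \<Longrightarrow> finite \<gamma>" using finite_gamma[OF sup] by blast
  have fe0: "finite (supp e0)" using e0 supp_finite[OF fg[OF g0]] by (simp add: errs_def)
  have fE: "\<And>\<gamma>. \<gamma> \<in> \<Gamma> \<Longrightarrow> finite (errs \<gamma>)" using fg finite_supported_in by (simp add: errs_def)
  define Q where "Q P = (\<Sum>m\<in>\<M>. comm_sign e0 m * ln (synd_exp n \<Gamma> P m)) / ?N" for P
  have learn: "learnable n \<Gamma> \<M> Q"
    unfolding learnable_def Q_def by (auto intro!: sum.cong)
  define cs where "cs = (\<Sum>\<gamma>\<in>\<Gamma>. real (card (errs \<gamma>)))"
  have cs0: "cs \<ge> 0" by (simp add: cs_def sum_nonneg)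
  have csle: "real (card (errs \<gamma>)) \<le> cs" if "\<gamma> \<in> \<Gamma>" for \<gamma>
    unfolding cs_def by (rule member_le_sum[OF that]) (auto simp: fin)
  define \<delta> where "\<delta> = 1 / (4 * (cs + 1))"
  have d0: "\<delta> > 0" using cs0 by (simp add: \<delta>_def)
  have dcs: "\<delta>^2 * cs \<le> 1/16"
  proof -
    have "\<delta>^2 * cs = cs / (16 * (cs + 1)^2)" by (simp add: \<delta>_def power2_eq_square field_simps)
    also have "\<dots> \<le> 1/16"
    proof -
      have "cs \<le> (cs + 1)^2" using cs0 by (simp add: power2_eq_square algebra_simps)
      then show ?thesis using cs0 by (simp add: field_simps)
    qed
    finally show ?thesis .
  qed
  define G where "G = fst ` ?C"
  have Gsub: "G \<subseteq> \<Gamma>" by (auto simp: G_def synd_class_def errs_disj_def)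
  have fG: "finite G" using finite_subset[OF Gsub fin] .
  have Cmem: "(\<gamma>, x) \<in> ?C \<longleftrightarrow> \<gamma> \<in> \<Gamma> \<and> x \<in> errs \<gamma> \<and> syndrome \<M> x = ?s0" for \<gamma> x
    by (simp add: synd_class_def errs_disj_def)
  have Gmem: "\<gamma> \<in> G \<longleftrightarrow> \<gamma> \<in> \<Gamma> \<and> (\<exists>x\<in>errs \<gamma>. syndrome \<M> x = ?s0)" for \<gamma>
    unfolding G_def using Cmem by force
  have Ceq: "?C = Sigma \<Gamma> (\<lambda>\<gamma>. {x\<in>errs \<gamma>. syndrome \<M> x = ?s0})"
    using Cmem by auto
  define R where "R P \<gamma> = (\<Sum>x\<in>{x\<in>errs \<gamma>. syndrome \<M> x = ?s0}. P \<gamma> x)" for P :: "nat set \<Rightarrow> npauli \<Rightarrow> real" and \<gamma>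
  define T where "T P \<gamma> = (\<Sum>m\<in>\<M>. comm_sign e0 m * ln (lam P \<gamma> m)) / ?N" for P :: "nat set \<Rightarrow> npauli \<Rightarrow> real" and \<gamma>
  define S where "S P \<gamma> = (\<Sum>x\<in>errs \<gamma>. (P \<gamma> x)^2)" for P :: "nat set \<Rightarrow> npauli \<Rightarrow> real" and \<gamma>
  have main: "\<bar>Q P - class_rate ?C P\<bar> \<le> (8 * cs) * rate_norm_sq (class_supports ?C) P"
    if P: "admissible \<Gamma> P" and small: "rate_norm_sq (class_supports ?C) P \<le> \<delta>\<^sup>2" for P
  proof -
    have norm: "rate_norm_sq (class_supports ?C) P = (\<Sum>\<gamma>\<in>G. S P \<gamma>)"
      unfolding rate_norm_sq_def class_supports_def G_def[symmetric] S_def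
      using fG Gsub fE by (subst sum.Sigma) auto
    have cr: "class_rate ?C P = (\<Sum>\<gamma>\<in>\<Gamma>. R P \<gamma>)"
      unfolding class_rate_def Ceq R_def using fin fE by (subst sum.Sigma) auto
    have qp: "Q P = (\<Sum>\<gamma>\<in>\<Gamma>. T P \<gamma>)"
    proof -
      have "Q P = (\<Sum>m\<in>\<M>. comm_sign e0 m * (\<Sum>\<gamma>\<in>\<Gamma>. ln (lam P \<gamma> m))) / ?N"
        unfolding Q_def
      proof (intro arg_cong[where f="\<lambda>t. t / ?N"] sum.cong refl)
        fix m assume m: "m \<in> \<M>"
        have fm: "finite (supp m)" using subgroup_supp[OF M m] .
        have "ln (synd_exp n \<Gamma> P m) = (\<Sum>\<gamma>\<in>\<Gamma>. ln (lam P \<gamma> m))"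
          unfolding synd_exp_prod[OF fin sup fm]
        proof (rule ln_prod[OF fin])
          fix i assume "i \<in> \<Gamma>"
          then have "lam P i m > 0" using lam_pos[OF P _ fg] by blast
          then show "lam P i m \<noteq> 0" by simp
        qed
        then show "comm_sign e0 m * ln (synd_exp n \<Gamma> P m) = comm_sign e0 m * (\<Sum>\<gamma>\<in>\<Gamma>. ln (lam P \<gamma> m))"
          by simp
      qed
      also have "\<dots> = (\<Sum>\<gamma>\<in>\<Gamma>. T P \<gamma>)"
        unfolding T_def sum_divide_distrib[symmetric] sum_distrib_left by (rule arg_cong[OF sum.swap])
      finally show ?thesis .
    qed
    have zero: "T P \<gamma> - R P \<gamma> = 0" if g: "\<gamma> \<in> \<Gamma> - G" for \<gamma>
    proof -
      have gG: "\<gamma> \<in> \<Gamma>" "\<gamma> \<notin> G" using g by auto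
      have nos: "\<forall>e\<in>supported_in \<gamma>. syndrome \<M> e \<noteq> ?s0"
      proof
        fix e assume e: "e \<in> supported_in \<gamma>"
        show "syndrome \<M> e \<noteq> ?s0"
        proof (cases "e = pid")
          case True then show ?thesis using nt by (simp add: syndrome_pid)
        next
          case False then have "e \<in> errs \<gamma>" using e by (simp add: errs_def)
          then show ?thesis using gG Gmem by blast
        qed
      qed
      have "(\<Sum>m\<in>\<M>. comm_sign e0 m * ln (lam P \<gamma> m)) = 0"
        by (rule restr_inv_zero[OF M fg[OF gG(1)] fe0 _ nos]) (rule ln_lam_restr)
      moreover have "{x\<in>errs \<gamma>. syndrome \<M> x = ?s0} = {}" using gG Gmem by blast
      ultimately show ?thesis unfolding T_def R_def by (simp only: sum.empty)
    qed
    have "Q P - class_rate ?C P = (\<Sum>\<gamma>\<in>\<Gamma>. T P \<gamma> - R P \<gamma>)"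
      by (simp add: qp cr sum_subtractf)
    also have "\<dots> = (\<Sum>\<gamma>\<in>G. T P \<gamma> - R P \<gamma>)"
      by (rule sum.mono_neutral_right[OF fin Gsub]) (use zero in blast)
    finally have eq: "Q P - class_rate ?C P = (\<Sum>\<gamma>\<in>G. T P \<gamma> - R P \<gamma>)" .
    have bnd: "\<bar>T P \<gamma> - R P \<gamma>\<bar> \<le> 8 * cs * S P \<gamma>" if g: "\<gamma> \<in> G" for \<gamma>
    proof -
      have gG: "\<gamma> \<in> \<Gamma>" using g Gsub by blast
      have S0: "\<And>\<gamma>. S P \<gamma> \<ge> 0" by (simp add: S_def sum_nonneg)
      have SG: "S P \<gamma> \<le> rate_norm_sq (class_supports ?C) P"
        unfolding norm by (rule member_le_sum[OF g]) (auto simp: S0 fG)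
      let ?s = "\<Sum>x\<in>errs \<gamma>. P \<gamma> x"
      have s_nonneg: "?s \<ge> 0" by (rule sum_nonneg) (simp add: adm_nonneg[OF P gG])
      have "?s^2 \<le> S P \<gamma> * real (card (errs \<gamma>))"
        unfolding S_def by (rule sum_squared_le_sum_of_squares)
      also have "\<dots> \<le> \<delta>^2 * cs"
        using SG small csle[OF gG] S0 by (intro mult_mono) auto
      also have "\<dots> \<le> 1/16" by (rule dcs)
      finally have s2: "?s^2 \<le> 1/16" .
      have small_s: "?s \<le> 1/4"
      proof (rule ccontr)
        assume "\<not> ?s \<le> 1/4"
        then have "(1/4)^2 < ?s^2" by (intro power_strict_mono) auto
        moreover have "((1::real)/4)^2 = 1/16" by (simp add: power2_eq_square)
        ultimately show False using s2 by linarith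
      qed
      have "\<bar>T P \<gamma> - R P \<gamma>\<bar> \<le> 8 * real (card (errs \<gamma>)) * S P \<gamma>"
        unfolding T_def R_def S_def by (rule gamma_bound[OF M P gG fg[OF gG] fe0 nt small_s])
      also have "\<dots> \<le> 8 * cs * S P \<gamma>" using csle[OF gG] S0 by (intro mult_right_mono) auto
      finally show ?thesis .
    qed
    have "\<bar>Q P - class_rate ?C P\<bar> \<le> (\<Sum>\<gamma>\<in>G. \<bar>T P \<gamma> - R P \<gamma>\<bar>)"
      unfolding eq by (rule sum_abs)
    also have "\<dots> \<le> (\<Sum>\<gamma>\<in>G. 8 * cs * S P \<gamma>)" by (rule sum_mono) (rule bnd)
    also have "\<dots> = (8 * cs) * rate_norm_sq (class_supports ?C) P"
      by (simp add: norm sum_distrib_left)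
    finally show ?thesis .
  qed
  show ?thesis using learn d0 main by blast
qed

theorem theorem2:
  fixes n :: nat and \<Gamma> :: "nat set set" and \<S> \<M> :: "npauli set"
  assumes fin: "finite \<Gamma>"
    and supports: "\<forall>\<gamma>\<in>\<Gamma>. \<gamma> \<subseteq> {..<n}"
    and stab: "abelian_pauli_subgroup n \<S>"
    and meas: "pauli_subgroup n \<M>" "\<M> \<subseteq> \<S>"
  shows
    "(learnable n \<Gamma> \<M> (total_dist \<Gamma>) \<longleftrightarrow>
        (\<forall>e\<in>errs_union \<Gamma>. syndrome \<M> e \<noteq> trivial_syndrome \<and>
           (\<forall>e'\<in>errs_union \<Gamma>. e' \<noteq> e \<longrightarrow> syndrome \<M> e' \<noteq> syndrome \<M> e)))
   \<and> (\<forall>\<gamma>\<in>\<Gamma>. learnable n \<Gamma> \<M> (\<lambda>P. P \<gamma>) \<longleftrightarrow>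
        (\<forall>e\<in>errs \<gamma>. syndrome \<M> e \<noteq> trivial_syndrome \<and>
           (\<forall>(\<gamma>', e')\<in>errs_disj \<Gamma>. (\<gamma>', e') \<noteq> (\<gamma>, e) \<longrightarrow> syndrome \<M> e' \<noteq> syndrome \<M> e)))
   \<and> (\<forall>(\<gamma>0, e0)\<in>errs_disj \<Gamma>. syndrome \<M> e0 \<noteq> trivial_syndrome \<longrightarrow>
        (let C = synd_class \<Gamma> \<M> e0 in
          \<exists>Q :: (nat set \<Rightarrow> npauli \<Rightarrow> real) \<Rightarrow> real. learnable n \<Gamma> \<M> Q \<and>
            (\<exists>K \<delta>. \<delta> > 0 \<and> (\<forall>P. admissible \<Gamma> P \<longrightarrow>
               rate_norm_sq (class_supports C) P \<le> \<delta>\<^sup>2 \<longrightarrow>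
               \<bar>Q P - class_rate C P\<bar> \<le> K * rate_norm_sq (class_supports C) P))))"
proof -
  note M = meas(1)
  obtain P0 where P0: "admissible \<Gamma> P0" using exists_adm[OF fin supports] by blast
  have fg: "\<And>\<gamma>. \<gamma> \<in> \<Gamma> \<Longrightarrow> finite \<gamma>" using finite_gamma[OF supports] by blast
  have errsV: "\<And>\<gamma> e. e \<in> errs \<gamma> \<Longrightarrow> e \<in> supported_in \<gamma> \<and> e \<noteq> pid" by (simp add: errs_def)
  have P1: "learnable n \<Gamma> \<M> (total_dist \<Gamma>) \<longleftrightarrow>
        (\<forall>e\<in>errs_union \<Gamma>. syndrome \<M> e \<noteq> trivial_syndrome \<and>
           (\<forall>e'\<in>errs_union \<Gamma>. e' \<noteq> e \<longrightarrow> syndrome \<M> e' \<noteq> syndrome \<M> e))"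
  proof
    assume L: "learnable n \<Gamma> \<M> (total_dist \<Gamma>)"
    have notL: False if P': "admissible \<Gamma> P'" and se: "\<forall>m\<in>\<M>. synd_exp n \<Gamma> P' m = synd_exp n \<Gamma> P0 m"
      and td: "total_dist \<Gamma> P' \<noteq> total_dist \<Gamma> P0" for P'
    proof -
      have "total_dist \<Gamma> P' = total_dist \<Gamma> P0" using L P' P0 se unfolding learnable_def by blast
      then show False using td by simp
    qed
    show "\<forall>e\<in>errs_union \<Gamma>. syndrome \<M> e \<noteq> trivial_syndrome \<and>
           (\<forall>e'\<in>errs_union \<Gamma>. e' \<noteq> e \<longrightarrow> syndrome \<M> e' \<noteq> syndrome \<M> e)"
    proof (intro ballI conjI impI)
      fix e assume e: "e \<in> errs_union \<Gamma>"
      then obtain \<gamma>1 where g1: "\<gamma>1 \<in> \<Gamma>" and e1: "e \<in> errs \<gamma>1" by (auto simp: errs_union_def)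
      show "syndrome \<M> e \<noteq> trivial_syndrome"
      proof
        assume t: "syndrome \<M> e = trivial_syndrome"
        show False
          using move_mass[OF M fin supports P0 g1 e1 pid_supported, of] errsV[OF e1] t notL
          by (auto simp: syndrome_pid)
      qed
      fix e' assume e': "e' \<in> errs_union \<Gamma>" and ne: "e' \<noteq> e"
      show "syndrome \<M> e' \<noteq> syndrome \<M> e"
      proof
        assume s: "syndrome \<M> e' = syndrome \<M> e"
        obtain \<gamma>2 where g2: "\<gamma>2 \<in> \<Gamma>" and e2: "e' \<in> errs \<gamma>2" using e' by (auto simp: errs_union_def)
        show False
        proof (cases "e' \<in> supported_in \<gamma>1")
          case True
          then show False using move_mass[OF M fin supports P0 g1 e1 True] ne s notL by auto
        next
          case False
          then have "\<gamma>1 \<noteq> \<gamma>2" using errsV[OF e2] by auto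
          then show False using flip_deflip[OF M fin supports P0 g1 g2 _ e1 e2] ne s notL by auto
        qed
      qed
    qed
  next
    assume U: "\<forall>e\<in>errs_union \<Gamma>. syndrome \<M> e \<noteq> trivial_syndrome \<and>
           (\<forall>e'\<in>errs_union \<Gamma>. e' \<noteq> e \<longrightarrow> syndrome \<M> e' \<noteq> syndrome \<M> e)"
    show "learnable n \<Gamma> \<M> (total_dist \<Gamma>)"
      unfolding learnable_def using part1_if[OF M fin supports U] by blast
  qed
  have P2: "learnable n \<Gamma> \<M> (\<lambda>P. P \<gamma>0) \<longleftrightarrow>
        (\<forall>e\<in>errs \<gamma>0. syndrome \<M> e \<noteq> trivial_syndrome \<and>
           (\<forall>(\<gamma>', e')\<in>errs_disj \<Gamma>. (\<gamma>', e') \<noteq> (\<gamma>0, e) \<longrightarrow> syndrome \<M> e' \<noteq> syndrome \<M> e))"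
    if g0: "\<gamma>0 \<in> \<Gamma>" for \<gamma>0
  proof
    assume L: "learnable n \<Gamma> \<M> (\<lambda>P. P \<gamma>0)"
    have notL: False if P': "admissible \<Gamma> P'" and se: "\<forall>m\<in>\<M>. synd_exp n \<Gamma> P' m = synd_exp n \<Gamma> P0 m"
      and td: "P' \<gamma>0 \<noteq> P0 \<gamma>0" for P'
    proof -
      have "P' \<gamma>0 = P0 \<gamma>0" using L P' P0 se unfolding learnable_def by blast
      then show False using td by simp
    qed
    show "\<forall>e\<in>errs \<gamma>0. syndrome \<M> e \<noteq> trivial_syndrome \<and>
           (\<forall>(\<gamma>', e')\<in>errs_disj \<Gamma>. (\<gamma>', e') \<noteq> (\<gamma>0, e) \<longrightarrow> syndrome \<M> e' \<noteq> syndrome \<M> e)"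
    proof (intro ballI conjI impI)
      fix e assume e1: "e \<in> errs \<gamma>0"
      show "syndrome \<M> e \<noteq> trivial_syndrome"
      proof
        assume t: "syndrome \<M> e = trivial_syndrome"
        show False
          using move_mass[OF M fin supports P0 g0 e1 pid_supported] errsV[OF e1] t notL
          by (auto simp: syndrome_pid)
      qed
      fix x assume x: "x \<in> errs_disj \<Gamma>"
      obtain \<gamma>2 e' where xe: "x = (\<gamma>2, e')" by (cases x)
      have g2: "\<gamma>2 \<in> \<Gamma>" and e2: "e' \<in> errs \<gamma>2" using x xe by (auto simp: errs_disj_def)
      show "case x of (\<gamma>', e') \<Rightarrow> (\<gamma>', e') \<noteq> (\<gamma>0, e) \<longrightarrow> syndrome \<M> e' \<noteq> syndrome \<M> e"
        unfolding xe split
      proof (intro impI notI)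
        assume ne: "(\<gamma>2, e') \<noteq> (\<gamma>0, e)" and s: "syndrome \<M> e' = syndrome \<M> e"
        show False
        proof (cases "\<gamma>2 = \<gamma>0")
          case True
          then have ne': "e \<noteq> e'" and e'V: "e' \<in> supported_in \<gamma>0" using ne errsV[OF e2] by auto
          have "\<exists>P'. admissible \<Gamma> P' \<and> (\<forall>m\<in>\<M>. synd_exp n \<Gamma> P' m = synd_exp n \<Gamma> P0 m)
           \<and> P' \<gamma>0 \<noteq> P0 \<gamma>0 \<and> total_dist \<Gamma> P' \<noteq> total_dist \<Gamma> P0"
            using move_mass[OF M fin supports P0 g0 e1 e'V ne'] s by simp
          then show False using notL by blast
        next
          case False
          then show False using flip_deflip[OF M fin supports P0 g0 g2 _ e1 e2] s notL by auto
        qed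
      qed
    qed
  next
    assume U: "\<forall>e\<in>errs \<gamma>0. syndrome \<M> e \<noteq> trivial_syndrome \<and>
           (\<forall>(\<gamma>', e')\<in>errs_disj \<Gamma>. (\<gamma>', e') \<noteq> (\<gamma>0, e) \<longrightarrow> syndrome \<M> e' \<noteq> syndrome \<M> e)"
    show "learnable n \<Gamma> \<M> (\<lambda>P. P \<gamma>0)"
      unfolding learnable_def using part2_if[OF M fin supports g0 U] by blast
  qed
  have P3: "\<forall>(\<gamma>0, e0)\<in>errs_disj \<Gamma>. syndrome \<M> e0 \<noteq> trivial_syndrome \<longrightarrow>
        (let C = synd_class \<Gamma> \<M> e0 in
          \<exists>Q :: (nat set \<Rightarrow> npauli \<Rightarrow> real) \<Rightarrow> real. learnable n \<Gamma> \<M> Q \<and>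
            (\<exists>K \<delta>. \<delta> > 0 \<and> (\<forall>P. admissible \<Gamma> P \<longrightarrow>
               rate_norm_sq (class_supports C) P \<le> \<delta>\<^sup>2 \<longrightarrow>
               \<bar>Q P - class_rate C P\<bar> \<le> K * rate_norm_sq (class_supports C) P)))"
  proof (intro ballI)
    fix x assume x: "x \<in> errs_disj \<Gamma>"
    obtain \<gamma>0 e0 where xe: "x = (\<gamma>0, e0)" by (cases x)
    have g0: "\<gamma>0 \<in> \<Gamma>" and e0: "e0 \<in> errs \<gamma>0" using x xe by (auto simp: errs_disj_def)
    show "case x of (\<gamma>0, e0) \<Rightarrow> syndrome \<M> e0 \<noteq> trivial_syndrome \<longrightarrow>
        (let C = synd_class \<Gamma> \<M> e0 in
          \<exists>Q :: (nat set \<Rightarrow> npauli \<Rightarrow> real) \<Rightarrow> real. learnable n \<Gamma> \<M> Q \<and>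
            (\<exists>K \<delta>. \<delta> > 0 \<and> (\<forall>P. admissible \<Gamma> P \<longrightarrow>
               rate_norm_sq (class_supports C) P \<le> \<delta>\<^sup>2 \<longrightarrow>
               \<bar>Q P - class_rate C P\<bar> \<le> K * rate_norm_sq (class_supports C) P)))"
      unfolding xe split Let_def using part3[OF M fin supports g0 e0] by blast
  qed
  show ?thesis by (rule conjI[OF P1 conjI[OF ballI[OF P2] P3]])
qed

end
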